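(* Under Assumption (A), for every constant $d>0$ not depending on $n$ there exist $\epsilon_0>0$ and an integer $N$ such that for every $n\ge N$ there is a probability measure $Q_n$ on $\mathcal X$ with $$P(x,\cdot)\ge\epsilon_0\,Q_n(\cdot)\qquad\text{for all }x\in R:=\{x\in\mathcal X: f(x)\le d\},$$ where $P$ is the transition kernel of the Gibbs sampler.
   Context: Fix $V>0$, $a>0$, $b_0>0$. For each $n\ge2$ observed data $Y_1,\dots,Y_n\in\mathbb R$ are given; $\bar Y=\frac1n\sum_iY_i$, $\Delta=\Delta_n=\sum_{i=1}^n(Y_i-\bar Y)^2$. Model: $Y_i\mid\theta_i\sim\mathcal N(\theta_i,V)$, $\theta_i\mid\mu,A\sim\mathcal N(\mu,A)$ independently ($1\le i\le n$), flat prior on $\mu\in\mathbb R$, $A\sim\mathrm{IG}(a,b_0)$ (density $\propto A^{-a-1}e^{-b_0/A}$ on $(0,\infty)$). The posterior $\pi$ on $\mathcal X=(0,\infty)\times\mathbb R\times\mathbb R^n$, $x=(A,\mu,\theta_1,\dots,\theta_n)$, has density $\propto A^{-a-1}e^{-b_0/A}\prod_{i=1}^n A^{-1/2}e^{-(\theta_i-\mu)^2/(2A)}e^{-(Y_i-\theta_i)^2/(2V)}$. Write $\bar\theta=\frac1n\sum_i\theta_i$. The Gibbs sampler $X^{(k)}=(A^{(k)},\mu^{(k)},\theta^{(k)}_1,\dots,\theta^{(k)}_n)$ updates: $\mu^{(k+1)}\sim\mathcal N(\bar\theta^{(k)},A^{(k)}/n)$; then independently $\theta_i^{(k+1)}\sim\mathcal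 N\big(\frac{\mu^{(k+1)}V+Y_iA^{(k)}}{V+A^{(k)}},\frac{A^{(k)}V}{V+A^{(k)}}\big)$, $i=1,\dots,n$; then $A^{(k+1)}\sim\mathrm{IG}\big(a+\frac{n-1}2,\ b_0+\frac12\sum_i(\theta_i^{(k+1)}-\bar\theta^{(k+1)})^2\big)$. Assumption (A): there are $\delta>0$, $M<\infty$ and an integer $N_0$ with $\frac{\Delta_n}{n-1}\le M$ for all $n$ and $\frac{\Delta_n}{n-1}\ge V+\delta$ for all $n\ge N_0$. Drift function: $f(x)=n(\bar\theta-\bar Y)^2+n\big[\big(\frac{\Delta}{n-1}-V\big)-A\big]^2$. *)

theory Defs
  imports "HOL-Probability.Probability"
begin

text \<open>State x = (A, mu, theta), theta :: nat => real, only coordinates i < n matter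
  (extensional on {..<n} in the product measure).\<close>

type_synonym state = "real \<times> real \<times> (nat \<Rightarrow> real)"

definition state_space :: "nat \<Rightarrow> state measure" where
  "state_space n = lborel \<Otimes>\<^sub>M (lborel \<Otimes>\<^sub>M (\<Pi>\<^sub>M i\<in>{..<n}. (lborel :: real measure)))"

definition Xset :: "nat \<Rightarrow> state set" where
  "Xset n = {x \<in> space (state_space n). fst x > 0}"

definition Ybar :: "(nat \<Rightarrow> nat \<Rightarrow> real) \<Rightarrow> nat \<Rightarrow> real" where
  "Ybar Y n = (\<Sum>i<n. Y n i) / real n"

definition Delta :: "(nat \<Rightarrow> nat \<Rightarrow> real) \<Rightarrow> nat \<Rightarrow> real" where
  "Delta Y n = (\<Sum>i<n. (Y n i - Ybar Y n)\<^sup>2)"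

definition thetabar :: "nat \<Rightarrow> (nat \<Rightarrow> real) \<Rightarrow> real" where
  "thetabar n \<theta> = (\<Sum>i<n. \<theta> i) / real n"

definition ig_density :: "real \<Rightarrow> real \<Rightarrow> real \<Rightarrow> real" where
  "ig_density \<alpha> \<beta> t =
     (if t > 0 then \<beta> powr \<alpha> / Gamma \<alpha> * t powr (-\<alpha> - 1) * exp (- \<beta> / t) else 0)"

text \<open>Transition density of the Gibbs sampler from x = (A, mu, theta) to y = (A', mu', theta'):
  mu' ~ N(thetabar, A/n); theta'_i ~ N((mu' V + Y_i A)/(V+A), A V/(V+A)) independently;
  A' ~ IG(a + (n-1)/2, b0 + 1/2 sum (theta'_i - thetabar')^2).
  normal_density takes the standard deviation.\<close>
definition gibbs_density ::
  "real \<Rightarrow> real \<Rightarrow> real \<Rightarrow> (nat \<Rightarrow> nat \<Rightarrow> real) \<Rightarrow> nat \<Rightarrow> state \<Rightarrow> state \<Rightarrow> real" where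
  "gibbs_density V a b0 Y n x y =
     (case x of (A, \<mu>, \<theta>) \<Rightarrow> case y of (A', \<mu>', \<theta>') \<Rightarrow>
        normal_density (thetabar n \<theta>) (sqrt (A / real n)) \<mu>'
        * (\<Prod>i<n. normal_density ((\<mu>' * V + Y n i * A) / (V + A)) (sqrt (A * V / (V + A))) (\<theta>' i))
        * ig_density (a + (real n - 1) / 2) (b0 + (\<Sum>i<n. (\<theta>' i - thetabar n \<theta>')\<^sup>2) / 2) A')"

definition gibbs_kernel ::
  "real \<Rightarrow> real \<Rightarrow> real \<Rightarrow> (nat \<Rightarrow> nat \<Rightarrow> real) \<Rightarrow> nat \<Rightarrow> state \<Rightarrow> state measure" where
  "gibbs_kernel V a b0 Y n x = density (state_space n) (\<lambda>y. ennreal (gibbs_density V a b0 Y n x y))"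

definition drift :: "real \<Rightarrow> (nat \<Rightarrow> nat \<Rightarrow> real) \<Rightarrow> nat \<Rightarrow> state \<Rightarrow> real" where
  "drift V Y n x =
     (case x of (A, \<mu>, \<theta>) \<Rightarrow>
        real n * (thetabar n \<theta> - Ybar Y n)\<^sup>2
        + real n * ((Delta Y n / (real n - 1) - V) - A)\<^sup>2)"

end

theory Submission
  imports Defs
begin

lemma nd_mass: assumes "0 < \<sigma>"
  shows "(\<integral>\<^sup>+x. ennreal (normal_density \<mu> \<sigma> x) \<partial>lborel) = 1"
proof -
  interpret prob_space "density lborel (normal_density \<mu> \<sigma>)"
    using assms by (simp add: prob_space_normal_density)
  have "emeasure (density lborel (normal_density \<mu> \<sigma>)) UNIV = 1"
    using emeasure_space_1 by simp
  thus ?thesis by (simp add: emeasure_density)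
qed

lemma nd_lin: assumes "0 < \<sigma>"
  shows "normal_density \<mu> \<sigma> x * exp (c * (x - \<mu>)) =
         exp (c^2 * \<sigma>^2 / 2) * normal_density (\<mu> + c * \<sigma>^2) \<sigma> x"
proof -
  have "-(x - \<mu>)\<^sup>2/ (2 * \<sigma>\<^sup>2) + c * (x - \<mu>) = c^2 * \<sigma>^2 / 2 + (-(x - (\<mu> + c * \<sigma>^2))\<^sup>2/ (2 * \<sigma>\<^sup>2))"
    using assms by (simp add: field_simps power2_eq_square)
  hence "exp (-(x - \<mu>)\<^sup>2/ (2 * \<sigma>\<^sup>2)) * exp (c * (x - \<mu>)) = exp (c^2 * \<sigma>^2 / 2) * exp (-(x - (\<mu> + c * \<sigma>^2))\<^sup>2/ (2 * \<sigma>\<^sup>2))"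
    by (simp add: exp_add[symmetric])
  thus ?thesis unfolding normal_density_def by (simp add: mult_ac)
qed

lemma nd_lin_mass: assumes "0 < \<sigma>"
  shows "(\<integral>\<^sup>+x. ennreal (normal_density \<mu> \<sigma> x * exp (c * (x - \<mu>))) \<partial>lborel) = ennreal (exp (c^2 * \<sigma>^2 / 2))"
proof -
  have "(\<integral>\<^sup>+x. ennreal (normal_density \<mu> \<sigma> x * exp (c * (x - \<mu>))) \<partial>lborel)
     = (\<integral>\<^sup>+x. ennreal (exp (c^2 * \<sigma>^2 / 2)) * ennreal (normal_density (\<mu> + c * \<sigma>^2) \<sigma> x) \<partial>lborel)"
    by (intro nn_integral_cong, subst nd_lin[OF assms], subst ennreal_mult) auto
  also have "\<dots> = ennreal (exp (c^2 * \<sigma>^2 / 2))"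
    using assms by (simp add: nn_integral_cmult nd_mass)
  finally show ?thesis .
qed

lemma nd_quad: assumes "0 < \<sigma>" "2 * c * \<sigma>^2 < 1"
  shows "normal_density \<mu> \<sigma> x * exp (c * (x - \<mu>)^2) =
         (1 / sqrt (1 - 2 * c * \<sigma>^2)) * normal_density \<mu> (\<sigma> / sqrt (1 - 2 * c * \<sigma>^2)) x"
proof -
  define r where "r = 1 - 2 * c * \<sigma>^2"
  have r: "r > 0" using assms by (simp add: r_def)
  have e: "-(x - \<mu>)\<^sup>2/ (2 * \<sigma>\<^sup>2) + c * (x - \<mu>)^2 = -(x - \<mu>)\<^sup>2/ (2 * (\<sigma> / sqrt r)\<^sup>2)"
    using assms r by (simp add: field_simps power2_eq_square r_def)
  have p: "1 / sqrt (2 * pi * \<sigma>\<^sup>2) = 1 / sqrt r * (1 / sqrt (2 * pi * (\<sigma> / sqrt r)\<^sup>2))"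
    using assms r by (simp add: power_divide real_sqrt_divide real_sqrt_mult field_simps)
  show ?thesis unfolding normal_density_def r_def[symmetric]
    using e p by (simp add: exp_add[symmetric] mult_ac)
qed

lemma nd_quad_mass: assumes "0 < \<sigma>" "2 * c * \<sigma>^2 < 1"
  shows "(\<integral>\<^sup>+x. ennreal (normal_density \<mu> \<sigma> x * exp (c * (x - \<mu>)^2)) \<partial>lborel) = ennreal (1 / sqrt (1 - 2 * c * \<sigma>^2))"
proof -
  have r: "sqrt (1 - 2 * c * \<sigma>^2) > 0" using assms by simp
  have "(\<integral>\<^sup>+x. ennreal (normal_density \<mu> \<sigma> x * exp (c * (x - \<mu>)^2)) \<partial>lborel)
     = (\<integral>\<^sup>+x. ennreal (1 / sqrt (1 - 2 * c * \<sigma>^2)) * ennreal (normal_density \<mu> (\<sigma> / sqrt (1 - 2 * c * \<sigma>^2)) x) \<partial>lborel)"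
    by (intro nn_integral_cong, subst nd_quad[OF assms], subst ennreal_mult) (use r in auto)
  also have "\<dots> = ennreal (1 / sqrt (1 - 2 * c * \<sigma>^2))"
    using assms r by (simp add: nn_integral_cmult nd_mass)
  finally show ?thesis .
qed


lemma ig_meas[measurable]: "(\<lambda>t. ig_density \<alpha> \<beta> t) \<in> borel_measurable borel"
  unfolding ig_density_def by measurable

lemma ig_nonneg: "\<alpha> > 0 \<Longrightarrow> \<beta> > 0 \<Longrightarrow> 0 \<le> ig_density \<alpha> \<beta> t"
  unfolding ig_density_def using Gamma_real_pos[of \<alpha>] by auto

lemma ig_subst_pt:
  assumes "\<alpha> > 0" "\<beta> > 0" "s > 0"
  shows "ig_density \<alpha> \<beta> (\<beta> / s) * (\<beta> / s^2) = s powr (\<alpha> - 1) / exp s / Gamma \<alpha>"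
proof -
  have bs: "\<beta> / s > 0" using assms by simp
  have e: "exp (- \<beta> / (\<beta> / s)) = exp (- s)" using assms by simp
  have 1: "(\<beta> / s) powr (-\<alpha> - 1) * (\<beta> / s^2) = (\<beta> / s) powr (-\<alpha>) / s"
  proof -
    have "(\<beta> / s) powr (-\<alpha> - 1) = (\<beta> / s) powr (-\<alpha>) / (\<beta> / s)"
      using bs assms by (simp add: powr_diff)
    thus ?thesis using assms by (simp add: field_simps power2_eq_square)
  qed
  have 2: "\<beta> powr \<alpha> * (\<beta> / s) powr (-\<alpha>) = s powr \<alpha>"
    using assms by (simp add: powr_minus powr_divide field_simps)
  have 3: "s powr \<alpha> / s = s powr (\<alpha> - 1)" using assms by (simp add: powr_diff)
  have "ig_density \<alpha> \<beta> (\<beta> / s) * (\<beta> / s^2) = \<beta> powr \<alpha> / Gamma \<alpha> * ((\<beta> / s) powr (-\<alpha> - 1) * (\<beta> / s^2)) * exp (- s)"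
    using bs e unfolding ig_density_def by (simp add: mult_ac)
  also have "\<dots> = (\<beta> powr \<alpha> * (\<beta> / s) powr (-\<alpha>)) / s / Gamma \<alpha> * exp (- s)"
    unfolding 1 by (simp add: field_simps)
  also have "\<dots> = s powr (\<alpha> - 1) / exp s / Gamma \<alpha>"
    unfolding 2 3[symmetric] by (simp add: exp_minus field_simps)
  finally show ?thesis .
qed

lemma unL_lemma:
  assumes b: "(\<beta>::real) > 0"
  shows "(\<Union>k::nat. {-\<beta> * (real k + 1) .. -\<beta> / (real k + 1)}) = {..<0}"
proof (intro equalityI subsetI)
  fix x assume "x \<in> (\<Union>k::nat. {-\<beta> * (real k + 1) .. -\<beta> / (real k + 1)})"
  then obtain k :: nat where "x \<le> -\<beta> / (real k + 1)" by auto
  moreover have "\<beta> / (real k + 1) > 0" using b by simp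
  ultimately show "x \<in> {..<0}" by simp
next
  fix x :: real assume "x \<in> {..<0}" hence x: "x < 0" by simp
  obtain k :: nat where k: "real k \<ge> max (-x / \<beta>) (\<beta> / (-x))" using real_arch_simple by blast
  have "(-x) / \<beta> \<le> real k + 1" using k by linarith
  with b have "-x \<le> (real k + 1) * \<beta>" by (simp only: pos_divide_le_eq)
  hence "-x \<le> \<beta> * (real k + 1)" by (simp only: mult.commute)
  moreover have "\<beta> / (real k + 1) \<le> -x"
  proof -
    have "\<beta> / (-x) \<le> real k + 1" using k by linarith
    moreover have "-x > 0" using x by simp
    ultimately have "\<beta> \<le> (real k + 1) * (-x)" by (simp only: pos_divide_le_eq)
    hence "\<beta> \<le> (-x) * (real k + 1)" by (simp only: mult.commute)
    moreover have "(0::real) < real k + 1" by simp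
    ultimately show ?thesis by (simp only: pos_divide_le_eq)
  qed
  ultimately have x1: "-\<beta> * (real k + 1) \<le> x" and x2: "x \<le> -(\<beta> / (real k + 1))" by linarith+
  from x2 have x3: "x \<le> -\<beta> / (real k + 1)" by (simp only: minus_divide_left)
  have "x \<in> {-\<beta> * (real k + 1) .. -\<beta> / (real k + 1)}" using x1 x3 by simp
  thus "x \<in> (\<Union>k::nat. {-\<beta> * (real k + 1) .. -\<beta> / (real k + 1)})" by (rule UN_I[OF UNIV_I])
qed

lemma unR_lemma:
  "(\<Union>k::nat. {1 / (real k + 1) .. real k + 1}) = {0<..}"
proof (intro equalityI subsetI)
  fix x assume "x \<in> (\<Union>k::nat. {1 / (real k + 1) .. real k + 1})"
  then obtain k :: nat where "1 / (real k + 1) \<le> x" by auto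
  moreover have "1 / (real k + 1) > 0" by simp
  ultimately have "x > 0" by linarith
  thus "x \<in> {0<..}" by simp
next
  fix x :: real assume "x \<in> {0<..}" hence x: "x > 0" by simp
  obtain k :: nat where k: "real k \<ge> max x (1 / x)" using real_arch_simple by blast
  have "1 / (real k + 1) \<le> x"
  proof -
    have "1 / x \<le> real k + 1" using k by linarith
    hence "1 \<le> (real k + 1) * x" using x by (simp add: divide_le_eq)
    thus ?thesis by (simp add: divide_le_eq mult.commute)
  qed
  moreover have "x \<le> real k + 1" using k by linarith
  ultimately show "x \<in> (\<Union>k::nat. {1 / (real k + 1) .. real k + 1})" by auto
qed

lemma incL_lemma: assumes b: "(\<beta>::real) > 0"
  shows "incseq (\<lambda>k::nat. {-\<beta> * (real k + 1) .. -\<beta> / (real k + 1)})"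
proof (rule incseq_SucI, rule subsetI)
  fix k :: nat and x assume "x \<in> {-\<beta> * (real k + 1) .. -\<beta> / (real k + 1)}"
  hence x1: "-\<beta> * (real k + 1) \<le> x" and x2: "x \<le> -\<beta> / (real k + 1)" by auto
  have "-\<beta> * (real (Suc k) + 1) \<le> -\<beta> * (real k + 1)" using b by simp
  moreover have "-\<beta> / (real k + 1) \<le> -\<beta> / (real (Suc k) + 1)"
    using b by (simp add: frac_le)
  ultimately show "x \<in> {-\<beta> * (real (Suc k) + 1) .. -\<beta> / (real (Suc k) + 1)}" using x1 x2 by auto
qed

lemma incR_lemma: "incseq (\<lambda>k::nat. {1 / (real k + 1) .. real k + 1})"
proof (rule incseq_SucI, rule subsetI)
  fix k :: nat and x assume "x \<in> {1 / (real k + 1) .. real k + 1}"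
  hence x1: "1 / (real k + 1) \<le> x" and x2: "x \<le> real k + 1" by auto
  have "1 / (real (Suc k) + 1) \<le> 1 / (real k + 1)" by (simp add: frac_le)
  thus "x \<in> {1 / (real (Suc k) + 1) .. real (Suc k) + 1}" using x1 x2 by auto
qed

lemma ig_level:
  assumes a: "\<alpha> > 0" and b: "\<beta> > 0"
  shows "(\<integral>\<^sup>+x. ennreal (ig_density \<alpha> \<beta> (-x)) * indicator {-\<beta> * (real k + 1) .. -\<beta> / (real k + 1)} x \<partial>lborel)
       = (\<integral>\<^sup>+x. ennreal (ig_density \<alpha> \<beta> (\<beta> / x) * (\<beta> / x^2)) * indicator {1 / (real k + 1) .. real k + 1} x \<partial>lborel)"
proof -
  define h where "h = (\<lambda>x. ig_density \<alpha> \<beta> (-x))"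
  have hm[measurable]: "h \<in> borel_measurable borel" unfolding h_def by measurable
  have kp: "(0::real) < 1 / (real k + 1)" by simp
  note sub = nn_integral_substitution[where f=h and g="\<lambda>s. -\<beta>/s" and g'="\<lambda>s. \<beta>/s^2"
     and a="1/(real k+1)" and b="real k+1"]
  have p1: "set_borel_measurable borel {(\<lambda>s. -\<beta>/s) (1 / (real k + 1)) .. (\<lambda>s. -\<beta>/s) (real k + 1)} h"
    unfolding set_borel_measurable_def by measurable
  have p2: "((\<lambda>s. - \<beta> / s) has_real_derivative (\<lambda>s. \<beta> / s^2) x) (at x)" if "x \<in> {1 / (real k + 1)..real k + 1}" for x
  proof -
    have "1 / (real k + 1) \<le> x" using that by simp
    with kp have "x > 0" by linarith
    thus ?thesis by (auto intro!: derivative_eq_intros simp: power2_eq_square)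
  qed
  have p3: "continuous_on {1 / (real k + 1)..real k + 1} (\<lambda>s. \<beta> / s\<^sup>2)"
    using kp by (intro continuous_intros) auto
  have p4: "\<And>x. x \<in> {1 / (real k + 1)..real k + 1} \<Longrightarrow> 0 \<le> (\<lambda>s. \<beta> / s^2) x" using b by auto
  have p5: "1 / (real k + 1) \<le> real k + 1"
  proof -
    have "1 / (real k + 1) \<le> 1" by simp
    thus ?thesis by linarith
  qed
  note sub2 = sub[OF p1 p2 p3 p4 p5]
  have l: "(\<integral>\<^sup>+x. ennreal (ig_density \<alpha> \<beta> (-x)) * indicator {-\<beta> * (real k + 1) .. -\<beta> / (real k + 1)} x \<partial>lborel)
     = (\<integral>\<^sup>+x. ennreal (h x * indicator {(\<lambda>s. -\<beta>/s) (1 / (real k + 1)) .. (\<lambda>s. -\<beta>/s) (real k + 1)} x) \<partial>lborel)"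
    by (intro nn_integral_cong) (simp add: h_def indicator_def)
  have r: "(\<integral>\<^sup>+x. ennreal (ig_density \<alpha> \<beta> (\<beta> / x) * (\<beta> / x^2)) * indicator {1 / (real k + 1) .. real k + 1} x \<partial>lborel)
     = (\<integral>\<^sup>+x. ennreal (h ((\<lambda>s. -\<beta>/s) x) * (\<lambda>s. \<beta> / s^2) x * indicator {1 / (real k + 1) .. real k + 1} x) \<partial>lborel)"
    by (intro nn_integral_cong) (simp add: h_def indicator_def)
  show ?thesis unfolding l r by (rule sub2)
qed

lemma ig_mass:
  assumes a: "\<alpha> > 0" and b: "\<beta> > 0"
  shows "(\<integral>\<^sup>+t. ennreal (ig_density \<alpha> \<beta> t) \<partial>lborel) = 1"
proof -
  define F where "F = (\<lambda>x. ennreal (ig_density \<alpha> \<beta> (-x)))"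
  have Fm[measurable]: "F \<in> borel_measurable borel" unfolding F_def by measurable
  define G where "G = (\<lambda>s. ennreal (ig_density \<alpha> \<beta> (\<beta> / s) * (\<beta> / s^2)))"
  have Gm[measurable]: "G \<in> borel_measurable borel" unfolding G_def by measurable
  define L where "L = (\<lambda>k::nat. {-\<beta> * (real k + 1) .. -\<beta> / (real k + 1)})"
  define R where "R = (\<lambda>k::nat. {1 / (real k + 1) .. real k + 1})"
  have step1: "(\<integral>\<^sup>+t. ennreal (ig_density \<alpha> \<beta> t) \<partial>lborel) = (\<integral>\<^sup>+x. F x \<partial>lborel)"
    using nn_integral_real_affine[of "\<lambda>t. ennreal (ig_density \<alpha> \<beta> t)" "-1" 0] unfolding F_def by simp
  have step2: "(\<integral>\<^sup>+x. F x \<partial>lborel) = emeasure (density lborel F) {..<0}"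
    by (subst emeasure_density) (auto intro!: nn_integral_cong simp: F_def ig_density_def indicator_def)
  have lev: "emeasure (density lborel F) (L k) = emeasure (density lborel G) (R k)" for k
  proof -
    have "emeasure (density lborel F) (L k) = (\<integral>\<^sup>+x. F x * indicator (L k) x \<partial>lborel)"
      by (rule emeasure_density) (auto simp: L_def)
    also have "\<dots> = (\<integral>\<^sup>+x. G x * indicator (R k) x \<partial>lborel)"
      unfolding F_def G_def L_def R_def by (rule ig_level[OF a b])
    also have "\<dots> = emeasure (density lborel G) (R k)"
      by (rule emeasure_density[symmetric]) (auto simp: R_def)
    finally show ?thesis .
  qed
  have UL: "(\<Union>k. L k) = {..<0}" unfolding L_def by (rule unL_lemma[OF b])
  have IL: "incseq L" unfolding L_def by (rule incL_lemma[OF b])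
  have UR: "(\<Union>k. R k) = {0<..}" unfolding R_def by (rule unR_lemma)
  have IR: "incseq R" unfolding R_def by (rule incR_lemma)
  have "emeasure (density lborel F) {..<0} = (SUP k. emeasure (density lborel F) (L k))"
    unfolding UL[symmetric]
    by (rule SUP_emeasure_incseq[symmetric, OF _ IL]) (auto simp: L_def)
  also have "\<dots> = (SUP k. emeasure (density lborel G) (R k))" by (simp add: lev)
  also have "\<dots> = emeasure (density lborel G) {0<..}"
    unfolding UR[symmetric] by (rule SUP_emeasure_incseq[OF _ IR]) (auto simp: R_def)
  also have "\<dots> = (\<integral>\<^sup>+s. ennreal (indicator {0..} s * s powr (\<alpha> - 1) / exp s) * ennreal (1 / Gamma \<alpha>) \<partial>lborel)"
  proof (subst emeasure_density)
    show "(\<integral>\<^sup>+ x. G x * indicator {0<..} x \<partial>lborel) =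
      (\<integral>\<^sup>+s. ennreal (indicator {0..} s * s powr (\<alpha> - 1) / exp s) * ennreal (1 / Gamma \<alpha>) \<partial>lborel)"
    proof (intro nn_integral_cong)
      fix s :: real
      show "G s * indicator {0<..} s = ennreal (indicator {0..} s * s powr (\<alpha> - 1) / exp s) * ennreal (1 / Gamma \<alpha>)"
      proof (cases "s > 0")
        case True
        thus ?thesis unfolding G_def using ig_subst_pt[OF a b True] Gamma_real_pos[OF a]
          by (simp add: ennreal_mult[symmetric] divide_inverse)
      next
        case False
        thus ?thesis by (cases "s = 0") (auto simp: indicator_def)
      qed
    qed
  qed auto
  also have "\<dots> = ennreal (Gamma \<alpha>) * ennreal (1 / Gamma \<alpha>)"
    by (subst nn_integral_multc) (auto simp: Gamma_conv_nn_integral_real a)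
  also have "\<dots> = 1" using Gamma_real_pos[OF a] by (simp add: ennreal_mult[symmetric])
  finally show ?thesis using step1 step2 by simp
qed


definition m_of :: "real \<Rightarrow> (nat \<Rightarrow> nat \<Rightarrow> real) \<Rightarrow> nat \<Rightarrow> real \<Rightarrow> nat \<Rightarrow> real \<Rightarrow> real" where
  "m_of V Y n A i \<mu>' = (\<mu>' * V + Y n i * A) / (V + A)"

definition sd_of :: "real \<Rightarrow> real \<Rightarrow> real" where
  "sd_of V A = sqrt (A * V / (V + A))"

lemma nd_ratio:
  assumes "s > 0" "s0 > 0"
  shows "normal_density m s t = normal_density m0 s0 t * exp (ln (s0 / s) - (t - m)^2 / (2 * s^2) + (t - m0)^2 / (2 * s0^2))"
proof -
  have e: "exp (ln (s0 / s) - (t - m)^2 / (2 * s^2) + (t - m0)^2 / (2 * s0^2))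
        = (s0 / s) * exp (- ((t - m)^2 / (2 * s^2))) * exp ((t - m0)^2 / (2 * s0^2))"
  proof -
    have "exp (ln (s0 / s) - (t - m)^2 / (2 * s^2) + (t - m0)^2 / (2 * s0^2))
        = exp (ln (s0 / s)) * exp (- ((t - m)^2 / (2 * s^2))) * exp ((t - m0)^2 / (2 * s0^2))"
      by (simp add: exp_add[symmetric])
    thus ?thesis using assms by simp
  qed
  have s: "sqrt (2 * pi * s^2) = sqrt (2 * pi) * s" "sqrt (2 * pi * s0^2) = sqrt (2 * pi) * s0"
    using assms by (simp_all add: real_sqrt_mult)
  have x: "exp (-(t - m0)\<^sup>2 / (2 * s0\<^sup>2)) * exp ((t - m0)^2 / (2 * s0^2)) = 1"
    by (simp add: exp_add[symmetric])
  show ?thesis unfolding normal_density_def e s using assms x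
    by (simp add: field_simps)
qed

lemma sd_sq: "V > 0 \<Longrightarrow> A > 0 \<Longrightarrow> (sd_of V A)^2 = A * V / (V + A)"
  unfolding sd_of_def by simp

lemma sd_pos: "V > 0 \<Longrightarrow> A > 0 \<Longrightarrow> sd_of V A > 0"
  unfolding sd_of_def by simp

lemma sd_diff: fixes V A A0 :: real assumes "V > 0" "A > 0" "A0 > 0"
  shows "\<bar>(sd_of V A0)^2 - (sd_of V A)^2\<bar> \<le> \<bar>A - A0\<bar>"
proof -
  have "(sd_of V A0)^2 - (sd_of V A)^2 = V^2 * (A0 - A) / ((V + A) * (V + A0))"
    unfolding sd_sq[OF assms(1,2)] sd_sq[OF assms(1,3)] using assms by (simp add: field_simps power2_eq_square)
  also have "\<bar>\<dots>\<bar> = (V^2 / ((V + A) * (V + A0))) * \<bar>A - A0\<bar>"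
    using assms by (simp add: abs_mult abs_minus_commute)
  also have "\<dots> \<le> 1 * \<bar>A - A0\<bar>"
  proof (rule mult_right_mono)
    have "V^2 \<le> (V + A) * (V + A0)" using assms by (simp add: power2_eq_square algebra_simps)
    moreover have "(V + A) * (V + A0) > 0" using assms by simp
    ultimately show "V^2 / ((V + A) * (V + A0)) \<le> 1" by (simp add: pos_divide_le_eq)
  qed simp
  finally show ?thesis by simp
qed

lemma m_diff: assumes "V > 0" "A > 0" "A0 > 0"
  shows "m_of V Y n A i \<mu>' - m_of V Y n A0 i \<mu>' = (A / (V + A) - A0 / (V + A0)) * (Y n i - \<mu>')"
  using assms unfolding m_of_def by (simp add: field_simps)

lemma kappa_bound: fixes V A A0 :: real assumes "V > 0" "A > 0" "A0 > 0"
  shows "\<bar>A / (V + A) - A0 / (V + A0)\<bar> \<le> \<bar>A - A0\<bar> / V"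
proof -
  have "A / (V + A) - A0 / (V + A0) = V * (A - A0) / ((V + A) * (V + A0))"
    using assms by (simp add: field_simps)
  also have "\<bar>\<dots>\<bar> = (V / ((V + A) * (V + A0))) * \<bar>A - A0\<bar>"
    using assms by (simp add: abs_mult)
  also have "\<dots> \<le> (1 / V) * \<bar>A - A0\<bar>"
  proof (rule mult_right_mono)
    have X: "(V + A) * (V + A0) > 0" using assms by simp
    have "V * V \<le> (V + A) * (V + A0)" using assms by (simp add: algebra_simps)
    hence "V * V / ((V + A) * (V + A0)) \<le> 1" using X by (simp add: pos_divide_le_eq)
    hence "V * (V / ((V + A) * (V + A0))) \<le> 1" by simp
    thus "V / ((V + A) * (V + A0)) \<le> 1 / V" using assms by (simp add: pos_le_divide_eq mult.commute)
  qed simp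
  finally show ?thesis by simp
qed

lemma sqrt_bound_prod:
  fixes x y K d :: real
  assumes h: "x^2 * y^2 \<le> K^2 * d" and K: "K \<ge> 0" and d: "d \<ge> 0"
  shows "\<bar>x\<bar> * \<bar>y\<bar> \<le> K * sqrt d"
proof -
  have e1: "(\<bar>x\<bar> * \<bar>y\<bar>)^2 = x^2 * y^2" by (simp only: power_mult_distrib power2_abs)
  have e2: "(K * sqrt d)^2 = K^2 * d" using d by (simp only: power_mult_distrib real_sqrt_pow2)
  have "(\<bar>x\<bar> * \<bar>y\<bar>)^2 \<le> (K * sqrt d)^2" unfolding e1 e2 by (rule h)
  moreover have "0 \<le> K * sqrt d" using K d by simp
  ultimately show ?thesis by (rule power2_le_imp_le)
qed
lemma part_a:
  fixes s s0 :: real assumes s: "s > 0" and s0: "s0 > 0"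
  shows "ln (s0 / s) + (1 / (2 * s0^2) - 1 / (2 * s^2)) * s0^2 \<ge> - ((s0^2 - s^2)^2 / (2 * s^2 * s0^2))"
proof -
  define r where "r = s0^2 / s^2"
  have r: "r > 0" using assms by (simp add: r_def)
  have "ln r = ln ((s0 / s)^2)" unfolding r_def by (simp add: power_divide)
  also have "\<dots> = 2 * ln (s0 / s)" using assms by (subst ln_realpow) auto
  finally have l: "ln (s0 / s) = ln r / 2" by simp
  have "ln (1 / r) \<le> 1 / r - 1" using r by (intro ln_le_minus_one) simp
  hence lr: "ln r \<ge> 1 - 1 / r" using r by (simp add: ln_div)
  have p: "(1 / (2 * s0^2) - 1 / (2 * s^2)) * s0^2 = 1/2 - r/2"
  proof -
    have "(1 / (2 * s0^2) - 1 / (2 * s^2)) * s0^2 = s0^2 / (2 * s0^2) - s0^2 / (2 * s^2)"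
      by (simp add: left_diff_distrib)
    also have "s0^2 / (2 * s0^2) = 1/2" using s0 by simp
    also have "s0^2 / (2 * s^2) = r / 2" unfolding r_def by simp
    finally show ?thesis .
  qed
  have q: "(s0^2 - s^2)^2 / (2 * s^2 * s0^2) = (r - 1)^2 / (2 * r)"
  proof -
    have "r - 1 = (s0^2 - s^2) / s^2" unfolding r_def using s by (simp add: diff_divide_distrib)
    hence "(r - 1)^2 = (s0^2 - s^2)^2 / (s^2)^2" by (simp add: power_divide)
    hence "(r - 1)^2 / (2 * r) = (s0^2 - s^2)^2 / (s^2)^2 / (2 * (s0^2 / s^2))" unfolding r_def by simp
    also have "\<dots> = (s0^2 - s^2)^2 / (2 * s^2 * s0^2)"
      using s s0 by (simp add: power2_eq_square)
    finally show ?thesis by simp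
  qed
  have e: "- ((r - 1)^2 / (2 * r)) = 1 - 1 / (2 * r) - r / 2"
    using r by (simp add: field_simps power2_eq_square)
  show ?thesis unfolding l p q e using lr by (simp add: field_simps)
qed

abbreviation PM :: "nat \<Rightarrow> (nat \<Rightarrow> real) measure" where
  "PM n \<equiv> \<Pi>\<^sub>M i\<in>{..<n}. (lborel :: real measure)"

interpretation lb_prod: product_sigma_finite "\<lambda>_::nat. lborel :: real measure"
  unfolding product_sigma_finite_def by (simp add: lborel.sigma_finite_measure_axioms)

lemma sf_PM: "sigma_finite_measure (PM n)"
  by (rule lb_prod.sigma_finite) simp

lemma sf_rest: "sigma_finite_measure (lborel \<Otimes>\<^sub>M PM n)"
  by (rule sigma_finite_pair_measure[OF lborel.sigma_finite_measure_axioms sf_PM])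

lemma prodint:
  assumes m: "\<And>i. i < n \<Longrightarrow> f i \<in> borel_measurable borel" and nn: "\<And>i x. i < n \<Longrightarrow> 0 \<le> f i x"
  shows "(\<integral>\<^sup>+\<theta>. ennreal (\<Prod>i<n. f i (\<theta> i)) \<partial>PM n) = (\<Prod>i<n. \<integral>\<^sup>+t. ennreal (f i t) \<partial>lborel)"
proof -
  have "(\<integral>\<^sup>+\<theta>. ennreal (\<Prod>i<n. f i (\<theta> i)) \<partial>PM n) = (\<integral>\<^sup>+\<theta>. (\<Prod>i<n. ennreal (f i (\<theta> i))) \<partial>PM n)"
    using nn by (intro nn_integral_cong, subst prod_ennreal) auto
  also have "\<dots> = (\<Prod>i<n. \<integral>\<^sup>+t. ennreal (f i t) \<partial>lborel)"
    using m by (intro lb_prod.product_nn_integral_prod) auto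
  finally show ?thesis .
qed

definition beta_of :: "real \<Rightarrow> nat \<Rightarrow> (nat \<Rightarrow> real) \<Rightarrow> real" where
  "beta_of b0 n \<theta>' = b0 + (\<Sum>i<n. (\<theta>' i - thetabar n \<theta>')\<^sup>2) / 2"

lemma gd_unf:
  "gibbs_density V a b0 Y n (A, \<mu>, \<theta>) y =
     normal_density (thetabar n \<theta>) (sqrt (A / real n)) (fst (snd y))
     * (\<Prod>i<n. normal_density (m_of V Y n A i (fst (snd y))) (sd_of V A) (snd (snd y) i))
     * ig_density (a + (real n - 1) / 2) (beta_of b0 n (snd (snd y))) (fst y)"
  unfolding gibbs_density_def m_of_def sd_of_def beta_of_def
  by (cases y) auto

lemma gd_meas[measurable]:
  "(\<lambda>y. gibbs_density V a b0 Y n (A, \<mu>, \<theta>) y) \<in> borel_measurable (state_space n)"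
proof -
  have m1: "(\<lambda>y::state. normal_density (thetabar n \<theta>) (sqrt (A / real n)) (fst (snd y))) \<in> borel_measurable (state_space n)"
    unfolding state_space_def by measurable
  have m2: "(\<lambda>y::state. (\<Prod>i<n. normal_density ((fst (snd y) * V + Y n i * A) / (V + A)) (sd_of V A) (snd (snd y) i))) \<in> borel_measurable (state_space n)"
    unfolding state_space_def normal_density_def by measurable
  have m3: "(\<lambda>y::state. ig_density (a + (real n - 1) / 2) (b0 + (\<Sum>i<n. (snd (snd y) i - (\<Sum>i<n. snd (snd y) i) / real n)\<^sup>2) / 2) (fst y)) \<in> borel_measurable (state_space n)"
    unfolding state_space_def ig_density_def by measurable
  have "(\<lambda>y. gibbs_density V a b0 Y n (A, \<mu>, \<theta>) y) = (\<lambda>y::state. normal_density (thetabar n \<theta>) (sqrt (A / real n)) (fst (snd y)) * (\<Prod>i<n. normal_density ((fst (snd y) * V + Y n i * A) / (V + A)) (sd_of V A) (snd (snd y) i))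
       * ig_density (a + (real n - 1) / 2) (b0 + (\<Sum>i<n. (snd (snd y) i - (\<Sum>i<n. snd (snd y) i) / real n)\<^sup>2) / 2) (fst y))"
    unfolding gd_unf m_of_def beta_of_def thetabar_def by simp
  thus ?thesis using m1 m2 m3 by simp
qed

lemma reduce:
  fixes F :: "real \<times> (nat \<Rightarrow> real) \<Rightarrow> real"
  assumes Fm[measurable]: "F \<in> borel_measurable (lborel \<Otimes>\<^sub>M PM n)" and Fnn: "\<And>z. 0 \<le> F z"
    and a: "a > 0" and b0: "b0 > 0" and n: "n \<ge> 1"
  shows "(\<integral>\<^sup>+y. ennreal (gibbs_density V a b0 Y n (A,\<mu>,\<theta>) y * F (snd y)) \<partial>state_space n)
     = (\<integral>\<^sup>+\<mu>'. ennreal (normal_density (thetabar n \<theta>) (sqrt (A / real n)) \<mu>') *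
          (\<integral>\<^sup>+\<theta>'. ennreal ((\<Prod>i<n. normal_density (m_of V Y n A i \<mu>') (sd_of V A) (\<theta>' i)) * F (\<mu>',\<theta>')) \<partial>PM n) \<partial>lborel)"
proof -
  define D where "D = (\<lambda>z::real \<times> (nat \<Rightarrow> real). normal_density (thetabar n \<theta>) (sqrt (A / real n)) (fst z)
      * (\<Prod>i<n. normal_density (m_of V Y n A i (fst z)) (sd_of V A) (snd z i)))"
  have Dnn: "0 \<le> D z" for z unfolding D_def by (intro mult_nonneg_nonneg prod_nonneg) auto
  have Dm[measurable]: "D \<in> borel_measurable (lborel \<Otimes>\<^sub>M PM n)"
  proof -
    have m1: "(\<lambda>z::real \<times> (nat \<Rightarrow> real). normal_density (thetabar n \<theta>) (sqrt (A / real n)) (fst z)) \<in> borel_measurable (lborel \<Otimes>\<^sub>M PM n)"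
      by measurable
    have m2: "(\<lambda>z::real \<times> (nat \<Rightarrow> real). (\<Prod>i<n. normal_density ((fst z * V + Y n i * A) / (V + A)) (sd_of V A) (snd z i))) \<in> borel_measurable (lborel \<Otimes>\<^sub>M PM n)"
      unfolding normal_density_def by measurable
    show ?thesis unfolding D_def m_of_def using m1 m2 by simp
  qed
  define bt where "bt = (\<lambda>\<theta>'. beta_of b0 n \<theta>')"
  have btp: "bt \<theta>' > 0" for \<theta>' unfolding bt_def beta_of_def using b0
    by (smt (verit, best) divide_nonneg_nonneg sum_nonneg zero_le_power2)
  have alp: "a + (real n - 1) / 2 > 0"
  proof -
    have "real n - 1 \<ge> 0" using n by simp
    hence "(real n - 1) / 2 \<ge> 0" by simp
    thus ?thesis using a by linarith
  qed
  have gd_eq: "gibbs_density V a b0 Y n (A,\<mu>,\<theta>) (A', z) = D z * ig_density (a + (real n - 1) / 2) (bt (snd z)) A'" for A' z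
    unfolding gd_unf D_def bt_def by simp
  interpret pr: pair_sigma_finite lborel "lborel \<Otimes>\<^sub>M PM n"
    unfolding pair_sigma_finite_def using lborel.sigma_finite_measure_axioms sf_rest by blast
  interpret spm: sigma_finite_measure "PM n" by (rule sf_PM)
  have fm: "(\<lambda>y. ennreal (gibbs_density V a b0 Y n (A,\<mu>,\<theta>) y * F (snd y))) \<in> borel_measurable (lborel \<Otimes>\<^sub>M (lborel \<Otimes>\<^sub>M PM n))"
  proof -
    have "(\<lambda>y. gibbs_density V a b0 Y n (A,\<mu>,\<theta>) y) \<in> borel_measurable (lborel \<Otimes>\<^sub>M (lborel \<Otimes>\<^sub>M PM n))"
      using gd_meas unfolding state_space_def .
    moreover have "(\<lambda>y::state. F (snd y)) \<in> borel_measurable (lborel \<Otimes>\<^sub>M (lborel \<Otimes>\<^sub>M PM n))" by measurable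
    ultimately show ?thesis by measurable
  qed
  have "(\<integral>\<^sup>+y. ennreal (gibbs_density V a b0 Y n (A,\<mu>,\<theta>) y * F (snd y)) \<partial>state_space n)
      = (\<integral>\<^sup>+z. \<integral>\<^sup>+A'. ennreal (gibbs_density V a b0 Y n (A,\<mu>,\<theta>) (A', z) * F z) \<partial>lborel \<partial>(lborel \<Otimes>\<^sub>M PM n))"
    unfolding state_space_def using pr.nn_integral_snd[OF fm] by simp
  also have "\<dots> = (\<integral>\<^sup>+z. ennreal (D z * F z) \<partial>(lborel \<Otimes>\<^sub>M PM n))"
  proof (rule nn_integral_cong)
    fix z :: "real \<times> (nat \<Rightarrow> real)"
    have "(\<integral>\<^sup>+A'. ennreal (gibbs_density V a b0 Y n (A,\<mu>,\<theta>) (A', z) * F z) \<partial>lborel)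
        = (\<integral>\<^sup>+A'. ennreal (D z * F z) * ennreal (ig_density (a + (real n - 1) / 2) (bt (snd z)) A') \<partial>lborel)"
      by (intro nn_integral_cong) (simp add: gd_eq ennreal_mult[symmetric] Dnn Fnn ig_nonneg alp btp mult_ac)
    also have "\<dots> = ennreal (D z * F z)"
      by (simp add: nn_integral_cmult ig_mass alp btp)
    finally show "(\<integral>\<^sup>+A'. ennreal (gibbs_density V a b0 Y n (A,\<mu>,\<theta>) (A', z) * F z) \<partial>lborel) = ennreal (D z * F z)" .
  qed
  also have "\<dots> = (\<integral>\<^sup>+\<mu>'. \<integral>\<^sup>+\<theta>'. ennreal (D (\<mu>',\<theta>') * F (\<mu>',\<theta>')) \<partial>PM n \<partial>lborel)"
    by (rule spm.nn_integral_fst[symmetric]) measurable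
  also have "\<dots> = (\<integral>\<^sup>+\<mu>'. ennreal (normal_density (thetabar n \<theta>) (sqrt (A / real n)) \<mu>') *
          (\<integral>\<^sup>+\<theta>'. ennreal ((\<Prod>i<n. normal_density (m_of V Y n A i \<mu>') (sd_of V A) (\<theta>' i)) * F (\<mu>',\<theta>')) \<partial>PM n) \<partial>lborel)"
  proof (rule nn_integral_cong)
    fix \<mu>' :: real
    have "(\<integral>\<^sup>+\<theta>'. ennreal (D (\<mu>',\<theta>') * F (\<mu>',\<theta>')) \<partial>PM n) = (\<integral>\<^sup>+\<theta>'. ennreal (normal_density (thetabar n \<theta>) (sqrt (A / real n)) \<mu>') *
          ennreal ((\<Prod>i<n. normal_density (m_of V Y n A i \<mu>') (sd_of V A) (\<theta>' i)) * F (\<mu>',\<theta>')) \<partial>PM n)"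
      by (intro nn_integral_cong) (simp add: D_def ennreal_mult[symmetric] Fnn prod_nonneg mult_ac)
    also have "\<dots> = ennreal (normal_density (thetabar n \<theta>) (sqrt (A / real n)) \<mu>') *
          (\<integral>\<^sup>+\<theta>'. ennreal ((\<Prod>i<n. normal_density (m_of V Y n A i \<mu>') (sd_of V A) (\<theta>' i)) * F (\<mu>',\<theta>')) \<partial>PM n)"
    proof (rule nn_integral_cmult)
      have "(\<lambda>\<theta>'. F (\<mu>',\<theta>')) \<in> borel_measurable (PM n)" by measurable
      moreover have "(\<lambda>\<theta>'::nat\<Rightarrow>real. (\<Prod>i<n. normal_density ((\<mu>' * V + Y n i * A) / (V + A)) (sd_of V A) (\<theta>' i))) \<in> borel_measurable (PM n)"
        unfolding normal_density_def by measurable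
      ultimately show "(\<lambda>\<theta>'. ennreal ((\<Prod>i<n. normal_density (m_of V Y n A i \<mu>') (sd_of V A) (\<theta>' i)) * F (\<mu>',\<theta>'))) \<in> borel_measurable (PM n)"
        unfolding m_of_def by measurable
    qed
    finally show "(\<integral>\<^sup>+\<theta>'. ennreal (D (\<mu>',\<theta>') * F (\<mu>',\<theta>')) \<partial>PM n) = ennreal (normal_density (thetabar n \<theta>) (sqrt (A / real n)) \<mu>') *
          (\<integral>\<^sup>+\<theta>'. ennreal ((\<Prod>i<n. normal_density (m_of V Y n A i \<mu>') (sd_of V A) (\<theta>' i)) * F (\<mu>',\<theta>')) \<partial>PM n)" .
  qed
  finally show ?thesis .
qed


lemma dlm: fixes a b c :: real shows "0 < b \<Longrightarrow> b \<le> a \<Longrightarrow> 0 \<le> c \<Longrightarrow> c / a \<le> c / b"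
  by (rule frac_le) auto

lemma abs_bound:
  fixes s s0 sL D V d K2 K3 W S Cs Cn \<kappa> nr :: real
  assumes s: "s > 0" and s0: "s0 > 0" and sL: "sL > 0" "sL \<le> s^2" "sL \<le> s0^2"
    and D: "\<bar>s0^2 - s^2\<bar> \<le> D" and k: "\<bar>\<kappa>\<bar> \<le> D / V" and V: "V > 0" and nD: "nr * D^2 \<le> d"
    and W: "W^2 \<le> K3^2 * nr" and S: "S^2 \<le> K2^2 * nr" and Cs: "0 \<le> Cs" "Cs \<le> nr * Cn"
    and K: "K2 \<ge> 0" "K3 \<ge> 0" and nr: "nr > 0" and d: "d \<ge> 0"
  shows "nr * (ln (s0 / s) + (1 / (2 * s0^2) - 1 / (2 * s^2)) * s0^2) + (1 / (2 * s0^2) - 1 / (2 * s^2)) * W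
         + (\<kappa> / s^2) * S - \<kappa>^2 / (2 * s^2) * Cs
     \<ge> - (d / (2 * sL^2) + K3 * sqrt d / (2 * sL^2) + K2 * sqrt d / (V * sL) + d * Cn / (2 * V^2 * sL))"
proof -
  have D0: "D \<ge> 0" using D by linarith
  have s2: "s^2 > 0" "s0^2 > 0" using s s0 by simp_all
  have ss: "sL^2 \<le> s^2 * s0^2"
  proof -
    have "sL * sL \<le> s^2 * s0^2" using sL by (intro mult_mono) auto
    thus ?thesis by (simp add: power2_eq_square)
  qed
  have sLsq: "sL^2 > 0" using sL by simp
  have ssp: "s^2 * s0^2 > 0" using s2 by simp
  have DD: "(s0^2 - s^2)^2 \<le> D^2"
  proof -
    have "\<bar>s0^2 - s^2\<bar>^2 \<le> D^2" using D by (intro power_mono) auto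
    thus ?thesis by simp
  qed
  have a1: "(s0^2 - s^2)^2 / (2 * s^2 * s0^2) \<le> D^2 / (2 * sL^2)"
  proof -
    have "(s0^2 - s^2)^2 / (2 * s^2 * s0^2) \<le> D^2 / (2 * s^2 * s0^2)"
      using DD ssp by (intro divide_right_mono) auto
    also have "\<dots> \<le> D^2 / (2 * sL^2)"
      using ss sLsq by (intro dlm) auto
    finally show ?thesis .
  qed
  have a: "nr * (ln (s0 / s) + (1 / (2 * s0^2) - 1 / (2 * s^2)) * s0^2) \<ge> - (d / (2 * sL^2))"
  proof -
    have "ln (s0 / s) + (1 / (2 * s0^2) - 1 / (2 * s^2)) * s0^2 \<ge> - (D^2 / (2 * sL^2))"
      using part_a[OF s s0] a1 by linarith
    hence "nr * (ln (s0 / s) + (1 / (2 * s0^2) - 1 / (2 * s^2)) * s0^2) \<ge> nr * (- (D^2 / (2 * sL^2)))"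
      using nr by (intro mult_left_mono) auto
    moreover have "nr * (D^2 / (2 * sL^2)) = (nr * D^2) / (2 * sL^2)" by simp
    moreover have "(nr * D^2) / (2 * sL^2) \<le> d / (2 * sL^2)"
      using nD sLsq by (intro divide_right_mono) auto
    ultimately show ?thesis by simp
  qed
  have pb: "\<bar>1 / (2 * s0^2) - 1 / (2 * s^2)\<bar> \<le> D / (2 * sL^2)"
  proof -
    have "1 / (2 * s0^2) - 1 / (2 * s^2) = (s^2 - s0^2) / (2 * s^2 * s0^2)"
      using s2 by (simp add: field_simps)
    hence "\<bar>1 / (2 * s0^2) - 1 / (2 * s^2)\<bar> = \<bar>s0^2 - s^2\<bar> / (2 * s^2 * s0^2)"
      using ssp by (simp add: abs_divide abs_minus_commute)
    also have "\<dots> \<le> D / (2 * s^2 * s0^2)" using D ssp by (intro divide_right_mono) auto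
    also have "\<dots> \<le> D / (2 * sL^2)" using ss sLsq D0 by (intro dlm) auto
    finally show ?thesis .
  qed
  have wd: "\<bar>W\<bar> * \<bar>D\<bar> \<le> K3 * sqrt d"
  proof (rule sqrt_bound_prod)
    have "W^2 * D^2 \<le> (K3^2 * nr) * D^2" using W by (intro mult_right_mono) auto
    also have "\<dots> = K3^2 * (nr * D^2)" by simp
    also have "\<dots> \<le> K3^2 * d" using nD by (intro mult_left_mono) auto
    finally show "W^2 * D^2 \<le> K3^2 * d" .
  qed (use K d in auto)
  have b: "\<bar>(1 / (2 * s0^2) - 1 / (2 * s^2)) * W\<bar> \<le> K3 * sqrt d / (2 * sL^2)"
  proof -
    have "\<bar>(1 / (2 * s0^2) - 1 / (2 * s^2)) * W\<bar> \<le> D / (2 * sL^2) * \<bar>W\<bar>"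
      unfolding abs_mult using pb by (intro mult_right_mono) auto
    also have "\<dots> = (\<bar>W\<bar> * \<bar>D\<bar>) / (2 * sL^2)" using D0 by simp
    also have "\<dots> \<le> K3 * sqrt d / (2 * sL^2)" using wd sLsq by (intro divide_right_mono) auto
    finally show ?thesis .
  qed
  have sd: "\<bar>S\<bar> * \<bar>D\<bar> \<le> K2 * sqrt d"
  proof (rule sqrt_bound_prod)
    have "S^2 * D^2 \<le> (K2^2 * nr) * D^2" using S by (intro mult_right_mono) auto
    also have "\<dots> = K2^2 * (nr * D^2)" by simp
    also have "\<dots> \<le> K2^2 * d" using nD by (intro mult_left_mono) auto
    finally show "S^2 * D^2 \<le> K2^2 * d" .
  qed (use K d in auto)
  have c: "\<bar>(\<kappa> / s^2) * S\<bar> \<le> K2 * sqrt d / (V * sL)"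
  proof -
    have "\<bar>(\<kappa> / s^2) * S\<bar> = (\<bar>\<kappa>\<bar> * \<bar>S\<bar>) / s^2" by (simp add: abs_mult abs_divide)
    also have "\<dots> \<le> (\<bar>\<kappa>\<bar> * \<bar>S\<bar>) / sL" using sL by (intro dlm) auto
    also have "\<dots> \<le> ((D / V) * \<bar>S\<bar>) / sL" using k sL by (intro divide_right_mono mult_right_mono) auto
    also have "\<dots> = (\<bar>S\<bar> * \<bar>D\<bar>) / (V * sL)" using D0 by simp
    also have "\<dots> \<le> K2 * sqrt d / (V * sL)" using sd V sL by (intro divide_right_mono) auto
    finally show ?thesis .
  qed
  have Cn0: "0 \<le> Cn"
  proof (rule ccontr)
    assume "\<not> 0 \<le> Cn" hence "nr * Cn < 0" using nr by (simp add: mult_pos_neg)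
    thus False using Cs by linarith
  qed
  have k2: "\<kappa>^2 \<le> D^2 / V^2"
  proof -
    have "\<bar>\<kappa>\<bar>^2 \<le> (D / V)^2" using k by (intro power_mono) auto
    thus ?thesis by (simp add: power_divide)
  qed
  have dd: "\<kappa>^2 / (2 * s^2) * Cs \<le> d * Cn / (2 * V^2 * sL)"
  proof -
    have "\<kappa>^2 / (2 * s^2) \<le> \<kappa>^2 / (2 * sL)" using sL by (intro dlm) auto
    also have "\<dots> \<le> (D^2 / V^2) / (2 * sL)" using k2 sL by (intro divide_right_mono) auto
    finally have "\<kappa>^2 / (2 * s^2) \<le> (D^2 / V^2) / (2 * sL)" .
    hence "\<kappa>^2 / (2 * s^2) * Cs \<le> (D^2 / V^2) / (2 * sL) * Cs" using Cs by (intro mult_right_mono) auto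
    also have "\<dots> \<le> (D^2 / V^2) / (2 * sL) * (nr * Cn)" using Cs sL by (intro mult_left_mono) auto
    also have "\<dots> = (nr * D^2) * Cn / (2 * V^2 * sL)" by (simp add: field_simps)
    also have "\<dots> \<le> d * Cn / (2 * V^2 * sL)"
      using nD Cn0 V sL by (intro divide_right_mono mult_right_mono) auto
    finally show ?thesis .
  qed
  have b': "(1 / (2 * s0^2) - 1 / (2 * s^2)) * W \<ge> - (K3 * sqrt d / (2 * sL^2))" using b unfolding abs_le_iff by linarith
  have c': "(\<kappa> / s^2) * S \<ge> - (K2 * sqrt d / (V * sL))" using c unfolding abs_le_iff by linarith
  show ?thesis using a b' c' dd by linarith
qed


lemma ell_identity:
  fixes u \<kappa> c s s0 :: real assumes "s > 0" "s0 > 0"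
  shows "u^2 / (2 * s0^2) - (u - \<kappa> * c)^2 / (2 * s^2)
    = (1 / (2 * s0^2) - 1 / (2 * s^2)) * s0^2 + (1 / (2 * s0^2) - 1 / (2 * s^2)) * (u^2 - s0^2)
      + (\<kappa> / s^2) * (u * c) - \<kappa>^2 / (2 * s^2) * c^2"
  using assms by (simp add: field_simps power2_eq_square)

lemma sum_ell:
  fixes t m m0 c :: "nat \<Rightarrow> real" and \<kappa> s s0 :: real
  assumes s: "s > 0" and s0: "s0 > 0" and mm: "\<And>i. m i - m0 i = \<kappa> * c i"
  shows "(\<Sum>i<n. ln (s0 / s) - (t i - m i)^2 / (2 * s^2) + (t i - m0 i)^2 / (2 * s0^2))
    = real n * (ln (s0 / s) + (1 / (2 * s0^2) - 1 / (2 * s^2)) * s0^2)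
      + (1 / (2 * s0^2) - 1 / (2 * s^2)) * (\<Sum>i<n. (t i - m0 i)^2 - s0^2)
      + (\<kappa> / s^2) * (\<Sum>i<n. (t i - m0 i) * c i) - \<kappa>^2 / (2 * s^2) * (\<Sum>i<n. (c i)^2)"
proof -
  define P where "P = 1 / (2 * s0^2) - 1 / (2 * s^2)"
  have pt: "ln (s0 / s) - (t i - m i)^2 / (2 * s^2) + (t i - m0 i)^2 / (2 * s0^2)
     = (ln (s0 / s) + P * s0^2) + P * ((t i - m0 i)^2 - s0^2) + (\<kappa> / s^2) * ((t i - m0 i) * c i)
       - \<kappa>^2 / (2 * s^2) * (c i)^2" for i
  proof -
    have e: "t i - m i = (t i - m0 i) - \<kappa> * c i" using mm[of i] by linarith
    have "(t i - m0 i)^2 / (2 * s0^2) - (t i - m i)^2 / (2 * s^2)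
        = P * s0^2 + P * ((t i - m0 i)^2 - s0^2) + (\<kappa> / s^2) * ((t i - m0 i) * c i) - \<kappa>^2 / (2 * s^2) * (c i)^2"
      unfolding P_def e by (rule ell_identity[OF s s0])
    thus ?thesis by simp
  qed
  show ?thesis unfolding pt P_def[symmetric]
    by (simp add: sum.distrib sum_distrib_left[symmetric] sum_subtractf sum_divide_distrib[symmetric])
qed


lemma sq_tri: fixes a b c :: real shows "(a - b)^2 \<le> 2 * (a - c)^2 + 2 * (c - b)^2"
proof -
  have "0 \<le> (a + b - 2 * c)^2" by simp
  thus ?thesis by (simp add: power2_eq_square algebra_simps)
qed

lemma csum_bound:
  fixes Y :: "nat \<Rightarrow> nat \<Rightarrow> real" and \<mu>' M K1 :: real
  assumes n: "n \<ge> 1" and D: "Delta Y n \<le> real n * M" and G: "real n * (\<mu>' - Ybar Y n)^2 \<le> K1^2"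
  shows "(\<Sum>i<n. (Y n i - \<mu>')^2) \<le> real n * (2 * (M + K1^2))"
proof -
  have "(\<Sum>i<n. (Y n i - \<mu>')^2) \<le> (\<Sum>i<n. 2 * (Y n i - Ybar Y n)^2 + 2 * (Ybar Y n - \<mu>')^2)"
    by (intro sum_mono sq_tri)
  also have "\<dots> = 2 * Delta Y n + 2 * (real n * (\<mu>' - Ybar Y n)^2)"
    unfolding Delta_def by (simp add: sum.distrib sum_distrib_left[symmetric] power2_commute)
  also have "\<dots> \<le> 2 * (real n * M) + 2 * K1^2" using D G by linarith
  also have "\<dots> \<le> 2 * (real n * M) + 2 * (real n * K1^2)"
  proof -
    have "1 * K1^2 \<le> real n * K1^2" using n by (intro mult_right_mono) auto
    thus ?thesis by simp
  qed
  finally show ?thesis by (simp add: algebra_simps)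
qed

definition Cconst :: "real \<Rightarrow> real \<Rightarrow> real \<Rightarrow> real \<Rightarrow> real \<Rightarrow> real \<Rightarrow> real \<Rightarrow> real \<Rightarrow> real" where
  "Cconst V \<delta> Mx d K1 K2 K3 M =
     (let sL = (\<delta> / 2) * V / (V + Mx) in
      (Mx / \<delta> - 1) / 2 + (2 * K1^2 + 2 * d) / \<delta> +
      (d / (2 * sL^2) + K3 * sqrt d / (2 * sL^2) + K2 * sqrt d / (V * sL) + d * (2 * (M + K1^2)) / (2 * V^2 * sL)))"

lemma mu_part:
  fixes A A0 \<delta> Mx d K1 tb Yb \<mu>' :: real
  assumes \<delta>: "\<delta> > 0" and n: "n \<ge> 1" and A0: "\<delta> \<le> A0" and A: "\<delta> / 2 \<le> A" "A \<le> Mx"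
    and tb: "real n * (tb - Yb)^2 \<le> d" and G: "real n * (\<mu>' - Yb)^2 \<le> K1^2"
  shows "ln (sqrt (A0 / real n) / sqrt (A / real n)) - (\<mu>' - tb)^2 / (2 * (sqrt (A / real n))^2)
          + (\<mu>' - Yb)^2 / (2 * (sqrt (A0 / real n))^2) \<ge> - ((Mx / \<delta> - 1) / 2 + (2 * K1^2 + 2 * d) / \<delta>)"
proof -
  have nr: "real n > 0" using n by simp
  have Ap: "A > 0" "A0 > 0" using \<delta> A A0 by linarith+
  have l1: "ln (sqrt (A0 / real n) / sqrt (A / real n)) = ln (A0 / A) / 2"
  proof -
    have "sqrt (A0 / real n) / sqrt (A / real n) = sqrt (A0 / A)"
      using nr Ap by (simp add: real_sqrt_divide[symmetric])
    thus ?thesis using Ap by (simp add: ln_sqrt)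
  qed
  have l2: "ln (A0 / A) \<ge> 1 - A / A0"
  proof -
    have "ln (A / A0) \<le> A / A0 - 1" using Ap by (intro ln_le_minus_one) simp
    moreover have "ln (A0 / A) = - ln (A / A0)" using Ap by (simp add: ln_div)
    ultimately show ?thesis by linarith
  qed
  have l3: "A / A0 \<le> Mx / \<delta>" using Ap A A0 \<delta> by (intro frac_le) auto
  have q1: "(\<mu>' - tb)^2 / (2 * (sqrt (A / real n))^2) = real n * (\<mu>' - tb)^2 / (2 * A)"
    using nr Ap by (simp add: field_simps)
  have q2: "real n * (\<mu>' - tb)^2 \<le> 2 * K1^2 + 2 * d"
  proof -
    have "real n * (\<mu>' - tb)^2 \<le> real n * (2 * (\<mu>' - Yb)^2 + 2 * (Yb - tb)^2)"
      using nr by (intro mult_left_mono sq_tri) auto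
    also have "\<dots> = 2 * (real n * (\<mu>' - Yb)^2) + 2 * (real n * (tb - Yb)^2)"
      by (simp add: algebra_simps power2_commute)
    finally show ?thesis using tb G by linarith
  qed
  have q3: "real n * (\<mu>' - tb)^2 / (2 * A) \<le> (2 * K1^2 + 2 * d) / \<delta>"
  proof (rule frac_le)
    show "0 \<le> 2 * K1^2 + 2 * d" using q2 nr by (smt (verit) mult_nonneg_nonneg zero_le_power2 of_nat_0_le_iff)
  qed (use q2 \<delta> A in auto)
  have q4: "(\<mu>' - Yb)^2 / (2 * (sqrt (A0 / real n))^2) \<ge> 0" by simp
  have h0: "1 - Mx / \<delta> \<le> ln (A0 / A)" using l2 l3 by linarith
  have h1: "ln (A0 / A) / 2 \<ge> (1 - Mx / \<delta>) / 2" using h0 by (rule divide_right_mono) simp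
  have h2: "- ((Mx / \<delta> - 1) / 2 + (2 * K1^2 + 2 * d) / \<delta>) = (1 - Mx / \<delta>) / 2 - (2 * K1^2 + 2 * d) / \<delta>"
    by (simp add: field_simps)
  have lin5: "\<And>x y q z r :: real. x \<ge> y \<Longrightarrow> q \<le> z \<Longrightarrow> r \<ge> 0 \<Longrightarrow> x - q + r \<ge> y - z" by linarith
  show ?thesis unfolding l1 q1 h2 by (rule lin5[OF h1 q3 q4])
qed

lemma thetabar_const: "n \<ge> 1 \<Longrightarrow> thetabar n (\<lambda>_. c) = c"
  unfolding thetabar_def by simp

lemma pointwise:
  fixes V a b0 :: real and Y :: "nat \<Rightarrow> nat \<Rightarrow> real" and A \<mu> :: real and \<theta> :: "nat \<Rightarrow> real"
    and A0 \<delta> Mx d K1 K2 K3 M :: real and y :: state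
  assumes V: "V > 0" and a: "a > 0" and b0: "b0 > 0" and \<delta>: "\<delta> > 0" and n: "n \<ge> 1"
    and A0: "\<delta> \<le> A0" "A0 \<le> Mx" and A: "\<delta> / 2 \<le> A" "A \<le> Mx"
    and dA: "real n * (A - A0)^2 \<le> d" and dth: "real n * (thetabar n \<theta> - Ybar Y n)^2 \<le> d" and d: "d \<ge> 0"
    and DM: "Delta Y n \<le> real n * M" and K: "K2 \<ge> 0" "K3 \<ge> 0"
    and G1: "real n * (fst (snd y) - Ybar Y n)^2 \<le> K1^2"
    and G2: "(\<Sum>i<n. (snd (snd y) i - m_of V Y n A0 i (fst (snd y))) * (Y n i - fst (snd y)))^2 \<le> K2^2 * real n"
    and G3: "(\<Sum>i<n. (snd (snd y) i - m_of V Y n A0 i (fst (snd y)))^2 - (sd_of V A0)^2)^2 \<le> K3^2 * real n"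
  shows "gibbs_density V a b0 Y n (A, \<mu>, \<theta>) y \<ge>
           exp (- Cconst V \<delta> Mx d K1 K2 K3 M) * gibbs_density V a b0 Y n (A0, 0, \<lambda>_. Ybar Y n) y"
proof -
  obtain A' \<mu>' t where y: "y = (A', \<mu>', t)" by (cases y) auto
  define Yb where "Yb = Ybar Y n"
  define s where "s = sd_of V A"
  define s0 where "s0 = sd_of V A0"
  define sL where "sL = (\<delta> / 2) * V / (V + Mx)"
  define \<kappa> where "\<kappa> = A / (V + A) - A0 / (V + A0)"
  define m where "m = (\<lambda>i. m_of V Y n A i \<mu>')"
  define m0 where "m0 = (\<lambda>i. m_of V Y n A0 i \<mu>')"
  define c where "c = (\<lambda>i. Y n i - \<mu>')"
  have nr: "real n > 0" using n by simp
  have Ap: "A > 0" "A0 > 0" using \<delta> A A0 by linarith+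
  have Mx: "Mx > 0" using Ap A by linarith
  have sp: "s > 0" "s0 > 0" unfolding s_def s0_def using V Ap by (simp_all add: sd_pos)
  have sLp: "sL > 0" unfolding sL_def using \<delta> V Mx by simp
  have sL_le: "sL \<le> B * V / (V + B)" if "\<delta> / 2 \<le> B" "B \<le> Mx" for B
  proof -
    have Bp: "B > 0" using that \<delta> by linarith
    have "(\<delta> / 2) / (V + Mx) \<le> B / (V + B)" using that V Bp by (intro frac_le) auto
    hence "(\<delta> / 2) / (V + Mx) * V \<le> B / (V + B) * V" using V by (intro mult_right_mono) auto
    thus ?thesis unfolding sL_def by simp
  qed
  have sLs: "sL \<le> s^2" unfolding s_def using sd_sq[OF V Ap(1)] sL_le[OF A] by simp
  have sLs0: "sL \<le> s0^2" unfolding s0_def using sd_sq[OF V Ap(2)] sL_le[of A0] A0 \<delta> by simp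
  have tbc: "thetabar n (\<lambda>_. Yb) = Yb" using n by (rule thetabar_const)
  have sg: "sqrt (A / real n) > 0" "sqrt (A0 / real n) > 0" using Ap nr by simp_all
  define l\<mu> where "l\<mu> = ln (sqrt (A0 / real n) / sqrt (A / real n)) - (\<mu>' - thetabar n \<theta>)^2 / (2 * (sqrt (A / real n))^2)
          + (\<mu>' - Yb)^2 / (2 * (sqrt (A0 / real n))^2)"
  have eq\<mu>: "normal_density (thetabar n \<theta>) (sqrt (A / real n)) \<mu>' = normal_density Yb (sqrt (A0 / real n)) \<mu>' * exp l\<mu>"
    unfolding l\<mu>_def by (rule nd_ratio[OF sg])
  have b\<mu>: "l\<mu> \<ge> - ((Mx / \<delta> - 1) / 2 + (2 * K1^2 + 2 * d) / \<delta>)"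
  proof -
    have dth': "real n * (thetabar n \<theta> - Yb)^2 \<le> d" using dth Yb_def by simp
    have G1': "real n * (\<mu>' - Yb)^2 \<le> K1^2" using G1 y Yb_def by simp
    show ?thesis unfolding l\<mu>_def by (rule mu_part[OF \<delta> n A0(1) A dth' G1'])
  qed
  define l where "l = (\<lambda>i. ln (s0 / s) - (t i - m i)^2 / (2 * s^2) + (t i - m0 i)^2 / (2 * s0^2))"
  have eq\<theta>: "(\<Prod>i<n. normal_density (m i) s (t i)) = (\<Prod>i<n. normal_density (m0 i) s0 (t i)) * exp (\<Sum>i<n. l i)"
  proof -
    have "(\<Prod>i<n. normal_density (m i) s (t i)) = (\<Prod>i<n. normal_density (m0 i) s0 (t i) * exp (l i))"
      unfolding l_def by (intro prod.cong refl nd_ratio[OF sp])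
    also have "\<dots> = (\<Prod>i<n. normal_density (m0 i) s0 (t i)) * exp (\<Sum>i<n. l i)"
      by (simp add: prod.distrib exp_sum)
    finally show ?thesis .
  qed
  have mm: "m i - m0 i = \<kappa> * c i" for i
    unfolding m_def m0_def \<kappa>_def c_def by (rule m_diff[OF V Ap])
  have sl: "(\<Sum>i<n. l i) = real n * (ln (s0 / s) + (1 / (2 * s0^2) - 1 / (2 * s^2)) * s0^2)
      + (1 / (2 * s0^2) - 1 / (2 * s^2)) * (\<Sum>i<n. (t i - m0 i)^2 - s0^2)
      + (\<kappa> / s^2) * (\<Sum>i<n. (t i - m0 i) * c i) - \<kappa>^2 / (2 * s^2) * (\<Sum>i<n. (c i)^2)"
    unfolding l_def by (rule sum_ell[OF sp mm])
  have b\<theta>: "(\<Sum>i<n. l i) \<ge> - (d / (2 * sL^2) + K3 * sqrt d / (2 * sL^2) + K2 * sqrt d / (V * sL) + d * (2 * (M + K1^2)) / (2 * V^2 * sL))"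
    unfolding sl
  proof (rule abs_bound[OF sp sLp sLs sLs0 _ _ V _ _ _ _ _ K nr d])
    show "\<bar>s0^2 - s^2\<bar> \<le> \<bar>A - A0\<bar>" unfolding s_def s0_def by (rule sd_diff[OF V Ap])
    show "\<bar>\<kappa>\<bar> \<le> \<bar>A - A0\<bar> / V" unfolding \<kappa>_def by (rule kappa_bound[OF V Ap])
    show "real n * \<bar>A - A0\<bar>^2 \<le> d" using dA by simp
    show "(\<Sum>i<n. (t i - m0 i)^2 - s0^2)^2 \<le> K3^2 * real n" using G3 unfolding y m0_def s0_def by simp
    show "(\<Sum>i<n. (t i - m0 i) * c i)^2 \<le> K2^2 * real n" using G2 unfolding y m0_def c_def by simp
    show "0 \<le> (\<Sum>i<n. (c i)^2)" by (simp add: sum_nonneg)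
    show "(\<Sum>i<n. (c i)^2) \<le> real n * (2 * (M + K1^2))"
      unfolding c_def by (rule csum_bound[OF n DM]) (use G1 y in simp)
  qed
  define IG where "IG = ig_density (a + (real n - 1) / 2) (beta_of b0 n t) A'"
  have g: "gibbs_density V a b0 Y n (A, \<mu>, \<theta>) y = normal_density (thetabar n \<theta>) (sqrt (A / real n)) \<mu>'
       * (\<Prod>i<n. normal_density (m i) s (t i)) * IG"
    unfolding gd_unf y m_def s_def IG_def by simp
  have g0: "gibbs_density V a b0 Y n (A0, 0, \<lambda>_. Ybar Y n) y = normal_density Yb (sqrt (A0 / real n)) \<mu>'
       * (\<Prod>i<n. normal_density (m0 i) s0 (t i)) * IG"
    unfolding gd_unf y m0_def s0_def IG_def Yb_def[symmetric] tbc by simp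
  have g_eq: "gibbs_density V a b0 Y n (A, \<mu>, \<theta>) y = gibbs_density V a b0 Y n (A0, 0, \<lambda>_. Ybar Y n) y * exp (l\<mu> + (\<Sum>i<n. l i))"
    unfolding g g0 eq\<mu> eq\<theta> by (simp add: exp_add mult_ac)
  have alp: "a + (real n - 1) / 2 > 0"
  proof -
    have "real n - 1 \<ge> 0" using n by simp
    hence "(real n - 1) / 2 \<ge> 0" by simp
    thus ?thesis using a by linarith
  qed
  have btp: "beta_of b0 n t > 0" unfolding beta_of_def using b0
    by (smt (verit, best) divide_nonneg_nonneg sum_nonneg zero_le_power2)
  have g0nn: "gibbs_density V a b0 Y n (A0, 0, \<lambda>_. Ybar Y n) y \<ge> 0"
    unfolding g0 IG_def using ig_nonneg[OF alp btp] by (intro mult_nonneg_nonneg prod_nonneg) auto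
  have Ceq: "Cconst V \<delta> Mx d K1 K2 K3 M = ((Mx / \<delta> - 1) / 2 + (2 * K1^2 + 2 * d) / \<delta>) +
      (d / (2 * sL^2) + K3 * sqrt d / (2 * sL^2) + K2 * sqrt d / (V * sL) + d * (2 * (M + K1^2)) / (2 * V^2 * sL))"
    unfolding Cconst_def sL_def Let_def by simp
  have "- Cconst V \<delta> Mx d K1 K2 K3 M \<le> l\<mu> + (\<Sum>i<n. l i)" unfolding Ceq using b\<mu> b\<theta> by linarith
  hence e: "exp (- Cconst V \<delta> Mx d K1 K2 K3 M) \<le> exp (l\<mu> + (\<Sum>i<n. l i))" by simp
  show ?thesis unfolding g_eq mult.commute[of "gibbs_density V a b0 Y n (A0, 0, \<lambda>_. Ybar Y n) y"]
    by (rule mult_right_mono[OF e g0nn])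
qed


lemma theta_mass:
  assumes s0: "s0 > 0" and h: "h \<ge> 0"
  shows "(\<integral>\<^sup>+\<theta>'. ennreal ((\<Prod>i<n. normal_density (m0 i) s0 (\<theta>' i)) * h) \<partial>PM n) = ennreal h"
proof -
  have "(\<integral>\<^sup>+\<theta>'. ennreal ((\<Prod>i<n. normal_density (m0 i) s0 (\<theta>' i)) * h) \<partial>PM n)
      = (\<integral>\<^sup>+\<theta>'. ennreal (\<Prod>i<n. normal_density (m0 i) s0 (\<theta>' i)) * ennreal h \<partial>PM n)"
    using h by (intro nn_integral_cong) (simp add: ennreal_mult prod_nonneg)
  also have "\<dots> = (\<integral>\<^sup>+\<theta>'. ennreal (\<Prod>i<n. normal_density (m0 i) s0 (\<theta>' i)) \<partial>PM n) * ennreal h"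
    by (rule nn_integral_multc) (unfold normal_density_def, measurable)
  also have "(\<integral>\<^sup>+\<theta>'. ennreal (\<Prod>i<n. normal_density (m0 i) s0 (\<theta>' i)) \<partial>PM n) = (\<Prod>i<n. \<integral>\<^sup>+t. ennreal (normal_density (m0 i) s0 t) \<partial>lborel)"
    by (rule prodint) auto
  also have "\<dots> = 1" using s0 by (simp add: nd_mass)
  finally show ?thesis by simp
qed

lemma theta_prod:
  assumes gm: "\<And>i. i < n \<Longrightarrow> g i \<in> borel_measurable borel" and gnn: "\<And>i t. 0 \<le> g i t"
  shows "(\<integral>\<^sup>+\<theta>'. ennreal ((\<Prod>i<n. normal_density (m0 i) s0 (\<theta>' i)) * (\<Prod>i<n. g i (\<theta>' i))) \<partial>PM n)
       = (\<Prod>i<n. \<integral>\<^sup>+t. ennreal (normal_density (m0 i) s0 t * g i t) \<partial>lborel)"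
proof -
  have "(\<integral>\<^sup>+\<theta>'. ennreal ((\<Prod>i<n. normal_density (m0 i) s0 (\<theta>' i)) * (\<Prod>i<n. g i (\<theta>' i))) \<partial>PM n)
      = (\<integral>\<^sup>+\<theta>'. ennreal (\<Prod>i<n. normal_density (m0 i) s0 (\<theta>' i) * g i (\<theta>' i)) \<partial>PM n)"
    by (simp add: prod.distrib)
  also have "\<dots> = (\<Prod>i<n. \<integral>\<^sup>+t. ennreal (normal_density (m0 i) s0 t * g i t) \<partial>lborel)"
  proof (rule prodint)
    fix i assume "i < n"
    hence [measurable]: "g i \<in> borel_measurable borel" by (rule gm)
    show "(\<lambda>t. normal_density (m0 i) s0 t * g i t) \<in> borel_measurable borel"
      unfolding normal_density_def by measurable
  qed (use gnn in simp)
  finally show ?thesis .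
qed

lemma markov_pt:
  fixes z K :: real assumes "z^2 > K^2" "K \<ge> 0"
  shows "exp K \<le> exp z + exp (- z)"
proof -
  have "\<bar>z\<bar> > K" using assms by (metis abs_le_square_iff abs_of_nonneg not_le)
  show ?thesis
  proof (cases "z \<ge> 0")
    case True
    hence "K \<le> z" using \<open>\<bar>z\<bar> > K\<close> by simp
    hence "exp K \<le> exp z" by simp
    moreover have "0 < exp (- z)" by simp
    ultimately show ?thesis by linarith
  next
    case False
    hence "K \<le> - z" using \<open>\<bar>z\<bar> > K\<close> by simp
    hence "exp K \<le> exp (- z)" by simp
    moreover have "0 < exp z" by simp
    ultimately show ?thesis by linarith
  qed
qed

lemma markov_ind:
  fixes z K :: real assumes "K \<ge> 0"
  shows "(if z^2 > K^2 then 1 else 0) \<le> (exp z + exp (- z)) * exp (- K)"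
proof (cases "z^2 > K^2")
  case True
  hence "exp K \<le> exp z + exp (- z)" using markov_pt assms by blast
  hence "exp K * exp (- K) \<le> (exp z + exp (- z)) * exp (- K)" by (intro mult_right_mono) auto
  thus ?thesis using True by (simp add: exp_minus)
qed (simp add: add_nonneg_nonneg)


lemma gd_nonneg:
  assumes a: "a > 0" and b0: "b0 > 0" and n: "n \<ge> 1"
  shows "gibbs_density V a b0 Y n (A, \<mu>, \<theta>) y \<ge> 0"
proof -
  have alp: "a + (real n - 1) / 2 > 0"
  proof -
    have "real n - 1 \<ge> 0" using n by simp
    hence "(real n - 1) / 2 \<ge> 0" by simp
    thus ?thesis using a by linarith
  qed
  have btp: "beta_of b0 n (snd (snd y)) > 0" unfolding beta_of_def using b0
    by (smt (verit, best) divide_nonneg_nonneg sum_nonneg zero_le_power2)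
  show ?thesis unfolding gd_unf using ig_nonneg[OF alp btp]
    by (intro mult_nonneg_nonneg prod_nonneg) auto
qed

lemma red0:
  fixes F :: "real \<times> (nat \<Rightarrow> real) \<Rightarrow> real"
  assumes Fm: "F \<in> borel_measurable (lborel \<Otimes>\<^sub>M PM n)" and Fnn: "\<And>z. 0 \<le> F z"
    and a: "a > 0" and b0: "b0 > 0" and n: "n \<ge> 1"
  shows "(\<integral>\<^sup>+y. ennreal (gibbs_density V a b0 Y n (A0, 0, \<lambda>_. Ybar Y n) y * F (snd y)) \<partial>state_space n)
     = (\<integral>\<^sup>+\<mu>'. ennreal (normal_density (Ybar Y n) (sqrt (A0 / real n)) \<mu>') *
          (\<integral>\<^sup>+\<theta>'. ennreal ((\<Prod>i<n. normal_density (m_of V Y n A0 i \<mu>') (sd_of V A0) (\<theta>' i)) * F (\<mu>',\<theta>')) \<partial>PM n) \<partial>lborel)"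
  using reduce[OF Fm Fnn a b0 n, of V Y A0 0 "\<lambda>_. Ybar Y n"] thetabar_const[OF n] by simp

lemma nd_two_sided:
  assumes \<sigma>: "\<sigma> > 0" and e: "e \<ge> 0"
  shows "(\<integral>\<^sup>+x. ennreal (normal_density \<mu> \<sigma> x * ((exp (c * (x - \<mu>)) + exp (- c * (x - \<mu>))) * e)) \<partial>lborel)
       = ennreal (2 * exp (c^2 * \<sigma>^2 / 2) * e)"
proof -
  define f1 where "f1 = (\<lambda>x. normal_density \<mu> \<sigma> x * exp (c * (x - \<mu>)))"
  define f2 where "f2 = (\<lambda>x. normal_density \<mu> \<sigma> x * exp ((- c) * (x - \<mu>)))"
  have m1[measurable]: "f1 \<in> borel_measurable borel" unfolding f1_def normal_density_def by measurable
  have m2[measurable]: "f2 \<in> borel_measurable borel" unfolding f2_def normal_density_def by measurable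
  have nn1: "f1 x \<ge> 0" for x unfolding f1_def by simp
  have nn2: "f2 x \<ge> 0" for x unfolding f2_def by simp
  have pt: "ennreal (normal_density \<mu> \<sigma> x * ((exp (c * (x - \<mu>)) + exp (- c * (x - \<mu>))) * e))
      = ennreal (f1 x) * ennreal e + ennreal (f2 x) * ennreal e" for x
  proof -
    have "normal_density \<mu> \<sigma> x * ((exp (c * (x - \<mu>)) + exp (- c * (x - \<mu>))) * e) = f1 x * e + f2 x * e"
      unfolding f1_def f2_def by (simp add: algebra_simps)
    also have "ennreal (f1 x * e + f2 x * e) = ennreal (f1 x * e) + ennreal (f2 x * e)"
      using nn1[of x] nn2[of x] e by (intro ennreal_plus) auto
    also have "ennreal (f1 x * e) = ennreal (f1 x) * ennreal e" using nn1[of x] e by (rule ennreal_mult)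
    also have "ennreal (f2 x * e) = ennreal (f2 x) * ennreal e" using nn2[of x] e by (rule ennreal_mult)
    finally show ?thesis .
  qed
  have "(\<integral>\<^sup>+x. ennreal (normal_density \<mu> \<sigma> x * ((exp (c * (x - \<mu>)) + exp (- c * (x - \<mu>))) * e)) \<partial>lborel)
     = (\<integral>\<^sup>+x. ennreal (f1 x) * ennreal e + ennreal (f2 x) * ennreal e \<partial>lborel)"
    by (simp only: pt)
  also have "\<dots> = (\<integral>\<^sup>+x. ennreal (f1 x) * ennreal e \<partial>lborel) + (\<integral>\<^sup>+x. ennreal (f2 x) * ennreal e \<partial>lborel)"
    by (rule nn_integral_add) measurable
  also have "(\<integral>\<^sup>+x. ennreal (f1 x) * ennreal e \<partial>lborel) = (\<integral>\<^sup>+x. ennreal (f1 x) \<partial>lborel) * ennreal e"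
    by (rule nn_integral_multc) measurable
  also have "(\<integral>\<^sup>+x. ennreal (f2 x) * ennreal e \<partial>lborel) = (\<integral>\<^sup>+x. ennreal (f2 x) \<partial>lborel) * ennreal e"
    by (rule nn_integral_multc) measurable
  also have "(\<integral>\<^sup>+x. ennreal (f1 x) \<partial>lborel) = ennreal (exp (c^2 * \<sigma>^2 / 2))"
    unfolding f1_def by (rule nd_lin_mass[OF \<sigma>])
  also have "(\<integral>\<^sup>+x. ennreal (f2 x) \<partial>lborel) = ennreal (exp (c^2 * \<sigma>^2 / 2))"
    unfolding f2_def using nd_lin_mass[OF \<sigma>, of \<mu> "- c"] by simp
  also have "ennreal (exp (c^2 * \<sigma>^2 / 2)) * ennreal e + ennreal (exp (c^2 * \<sigma>^2 / 2)) * ennreal e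
      = ennreal (2 * exp (c^2 * \<sigma>^2 / 2) * e)"
  proof -
    have "ennreal (exp (c^2 * \<sigma>^2 / 2)) * ennreal e = ennreal (exp (c^2 * \<sigma>^2 / 2) * e)"
      using e by (intro ennreal_mult[symmetric]) auto
    moreover have "ennreal (exp (c^2 * \<sigma>^2 / 2) * e) + ennreal (exp (c^2 * \<sigma>^2 / 2) * e) = ennreal (2 * exp (c^2 * \<sigma>^2 / 2) * e)"
      using e by (subst ennreal_plus[symmetric]) auto
    ultimately show ?thesis by simp
  qed
  finally show ?thesis .
qed


lemma total_mass:
  assumes V: "V > 0" and a: "a > 0" and b0: "b0 > 0" and n: "n \<ge> 1" and A0: "A0 > 0"
  shows "(\<integral>\<^sup>+y. ennreal (gibbs_density V a b0 Y n (A0, 0, \<lambda>_. Ybar Y n) y) \<partial>state_space n) = 1"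
proof -
  have s0: "sd_of V A0 > 0" using V A0 by (rule sd_pos)
  have sg: "sqrt (A0 / real n) > 0" using A0 n by simp
  have "(\<integral>\<^sup>+y. ennreal (gibbs_density V a b0 Y n (A0, 0, \<lambda>_. Ybar Y n) y) \<partial>state_space n)
      = (\<integral>\<^sup>+y. ennreal (gibbs_density V a b0 Y n (A0, 0, \<lambda>_. Ybar Y n) y * (\<lambda>_. 1) (snd y)) \<partial>state_space n)"
    by simp
  also have "\<dots> = (\<integral>\<^sup>+\<mu>'. ennreal (normal_density (Ybar Y n) (sqrt (A0 / real n)) \<mu>') *
          (\<integral>\<^sup>+\<theta>'. ennreal ((\<Prod>i<n. normal_density (m_of V Y n A0 i \<mu>') (sd_of V A0) (\<theta>' i)) * (\<lambda>_. 1) (\<mu>',\<theta>')) \<partial>PM n) \<partial>lborel)"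
    by (rule red0[OF _ _ a b0 n]) auto
  also have "\<dots> = (\<integral>\<^sup>+\<mu>'. ennreal (normal_density (Ybar Y n) (sqrt (A0 / real n)) \<mu>') \<partial>lborel)"
    using theta_mass[OF s0, of 1] by simp
  also have "\<dots> = 1" by (rule nd_mass[OF sg])
  finally show ?thesis .
qed

lemma bad1:
  assumes V: "V > 0" and a: "a > 0" and b0: "b0 > 0" and n: "n \<ge> 1" and A0: "A0 > 0" and K1: "K1 \<ge> 0"
  shows "(\<integral>\<^sup>+y. ennreal (gibbs_density V a b0 Y n (A0, 0, \<lambda>_. Ybar Y n) y *
            (if real n * (fst (snd y) - Ybar Y n)^2 > K1^2 then 1 else 0)) \<partial>state_space n)
        \<le> ennreal (2 * exp (A0 / 2) * exp (- K1))"
proof -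
  have s0: "sd_of V A0 > 0" using V A0 by (rule sd_pos)
  have sg: "sqrt (A0 / real n) > 0" using A0 n by simp
  define H where "H = (\<lambda>z::real \<times> (nat \<Rightarrow> real). (exp (sqrt (real n) * (fst z - Ybar Y n)) + exp (- sqrt (real n) * (fst z - Ybar Y n))) * exp (- K1))"
  have Hnn: "H z \<ge> 0" for z unfolding H_def by simp
  have Hm: "H \<in> borel_measurable (lborel \<Otimes>\<^sub>M PM n)" unfolding H_def by measurable
  have "(\<integral>\<^sup>+y. ennreal (gibbs_density V a b0 Y n (A0, 0, \<lambda>_. Ybar Y n) y *
            (if real n * (fst (snd y) - Ybar Y n)^2 > K1^2 then 1 else 0)) \<partial>state_space n)
      \<le> (\<integral>\<^sup>+y. ennreal (gibbs_density V a b0 Y n (A0, 0, \<lambda>_. Ybar Y n) y * H (snd y)) \<partial>state_space n)"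
  proof (intro nn_integral_mono ennreal_leI mult_left_mono)
    fix y :: state
    have "(sqrt (real n) * (fst (snd y) - Ybar Y n))^2 = real n * (fst (snd y) - Ybar Y n)^2"
      by (simp add: power_mult_distrib)
    thus "(if real n * (fst (snd y) - Ybar Y n)^2 > K1^2 then 1 else 0) \<le> H (snd y)"
      unfolding H_def using markov_ind[OF K1, of "sqrt (real n) * (fst (snd y) - Ybar Y n)"] by simp
    show "0 \<le> gibbs_density V a b0 Y n (A0, 0, \<lambda>_. Ybar Y n) y" by (rule gd_nonneg[OF a b0 n])
  qed
  also have "\<dots> = (\<integral>\<^sup>+\<mu>'. ennreal (normal_density (Ybar Y n) (sqrt (A0 / real n)) \<mu>') *
          (\<integral>\<^sup>+\<theta>'. ennreal ((\<Prod>i<n. normal_density (m_of V Y n A0 i \<mu>') (sd_of V A0) (\<theta>' i)) * H (\<mu>',\<theta>')) \<partial>PM n) \<partial>lborel)"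
    by (rule red0[OF Hm Hnn a b0 n])
  also have "\<dots> = (\<integral>\<^sup>+\<mu>'. ennreal (normal_density (Ybar Y n) (sqrt (A0 / real n)) \<mu>' *
        ((exp (sqrt (real n) * (\<mu>' - Ybar Y n)) + exp (- sqrt (real n) * (\<mu>' - Ybar Y n))) * exp (- K1))) \<partial>lborel)"
  proof (intro nn_integral_cong)
    fix \<mu>' :: real
    have "(\<integral>\<^sup>+\<theta>'. ennreal ((\<Prod>i<n. normal_density (m_of V Y n A0 i \<mu>') (sd_of V A0) (\<theta>' i)) * H (\<mu>',\<theta>')) \<partial>PM n)
        = ennreal (H (\<mu>', undefined))"
      using theta_mass[OF s0 Hnn, of n "\<lambda>i. m_of V Y n A0 i \<mu>'" "(\<mu>', undefined)"] unfolding H_def by simp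
    thus "ennreal (normal_density (Ybar Y n) (sqrt (A0 / real n)) \<mu>') *
          (\<integral>\<^sup>+\<theta>'. ennreal ((\<Prod>i<n. normal_density (m_of V Y n A0 i \<mu>') (sd_of V A0) (\<theta>' i)) * H (\<mu>',\<theta>')) \<partial>PM n)
        = ennreal (normal_density (Ybar Y n) (sqrt (A0 / real n)) \<mu>' *
        ((exp (sqrt (real n) * (\<mu>' - Ybar Y n)) + exp (- sqrt (real n) * (\<mu>' - Ybar Y n))) * exp (- K1)))"
      unfolding H_def by (simp add: ennreal_mult[symmetric])
  qed
  also have "\<dots> = ennreal (2 * exp ((sqrt (real n))^2 * (sqrt (A0 / real n))^2 / 2) * exp (- K1))"
    by (rule nd_two_sided[OF sg]) simp
  also have "(sqrt (real n))^2 * (sqrt (A0 / real n))^2 = A0" using n A0 by simp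
  finally show ?thesis by simp
qed


definition Sstat :: "real \<Rightarrow> (nat \<Rightarrow> nat \<Rightarrow> real) \<Rightarrow> nat \<Rightarrow> real \<Rightarrow> real \<times> (nat \<Rightarrow> real) \<Rightarrow> real" where
  "Sstat V Y n A0 z = (\<Sum>i<n. (snd z i - m_of V Y n A0 i (fst z)) * (Y n i - fst z))"

lemma Sstat_meas[measurable]: "Sstat V Y n A0 \<in> borel_measurable (lborel \<Otimes>\<^sub>M PM n)"
  unfolding Sstat_def m_of_def by measurable

lemma inner_S:
  assumes s0: "s0 > 0" and sg: "sg^2 = 1" and n: "n \<ge> 1"
  shows "(\<integral>\<^sup>+\<theta>'. ennreal ((\<Prod>i<n. normal_density (m_of V Y n A0 i \<mu>') s0 (\<theta>' i)) * exp (sg * Sstat V Y n A0 (\<mu>', \<theta>') / sqrt (real n))) \<partial>PM n)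
       = ennreal (exp (s0^2 * (\<Sum>i<n. (Y n i - \<mu>')^2) / (2 * real n)))"
proof -
  define c where "c = (\<lambda>i. sg * (Y n i - \<mu>') / sqrt (real n))"
  define m0 where "m0 = (\<lambda>i. m_of V Y n A0 i \<mu>')"
  have e: "exp (sg * Sstat V Y n A0 (\<mu>', \<theta>') / sqrt (real n)) = (\<Prod>i<n. exp (c i * (\<theta>' i - m0 i)))" for \<theta>'
  proof -
    have "sg * Sstat V Y n A0 (\<mu>', \<theta>') / sqrt (real n) = (\<Sum>i<n. c i * (\<theta>' i - m0 i))"
      unfolding Sstat_def c_def m0_def by (simp add: sum_distrib_left sum_divide_distrib algebra_simps)
    thus ?thesis by (simp add: exp_sum)
  qed
  have "(\<integral>\<^sup>+\<theta>'. ennreal ((\<Prod>i<n. normal_density (m_of V Y n A0 i \<mu>') s0 (\<theta>' i)) * exp (sg * Sstat V Y n A0 (\<mu>', \<theta>') / sqrt (real n))) \<partial>PM n)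
      = (\<integral>\<^sup>+\<theta>'. ennreal ((\<Prod>i<n. normal_density (m0 i) s0 (\<theta>' i)) * (\<Prod>i<n. (\<lambda>i t. exp (c i * (t - m0 i))) i (\<theta>' i))) \<partial>PM n)"
    unfolding e m0_def by simp
  also have "\<dots> = (\<Prod>i<n. \<integral>\<^sup>+t. ennreal (normal_density (m0 i) s0 t * exp (c i * (t - m0 i))) \<partial>lborel)"
    by (rule theta_prod) auto
  also have "\<dots> = (\<Prod>i<n. ennreal (exp ((c i)^2 * s0^2 / 2)))"
    by (intro prod.cong refl nd_lin_mass[OF s0])
  also have "\<dots> = ennreal (\<Prod>i<n. exp ((c i)^2 * s0^2 / 2))" by (rule prod_ennreal) simp
  also have "(\<Prod>i<n. exp ((c i)^2 * s0^2 / 2)) = exp (\<Sum>i<n. (c i)^2 * s0^2 / 2)" by (simp add: exp_sum)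
  also have "(\<Sum>i<n. (c i)^2 * s0^2 / 2) = s0^2 * (\<Sum>i<n. (Y n i - \<mu>')^2) / (2 * real n)"
  proof -
    have "(c i)^2 = (Y n i - \<mu>')^2 / real n" for i
      unfolding c_def using n by (simp add: power_mult_distrib power_divide mult.assoc[symmetric] sg)
    hence "(\<Sum>i<n. (c i)^2 * s0^2 / 2) = (\<Sum>i<n. s0^2 * (Y n i - \<mu>')^2 / (2 * real n))"
      by (intro sum.cong refl) (simp add: field_simps)
    also have "\<dots> = s0^2 * (\<Sum>i<n. (Y n i - \<mu>')^2) / (2 * real n)"
      by (simp add: sum_distrib_left sum_divide_distrib)
    finally show ?thesis .
  qed
  finally show ?thesis .
qed

lemma ring_aux: fixes p a b e :: real shows "p * (1 * ((a + b) * e)) = p * a * e + p * b * e"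
  by (simp add: algebra_simps)

lemma enn_split2: fixes x y e :: real assumes "x \<ge> 0" "y \<ge> 0" "e \<ge> 0"
  shows "ennreal (x * e + y * e) = ennreal x * ennreal e + ennreal y * ennreal e"
  using assms by (simp add: ennreal_plus ennreal_mult)

lemma enn_double: fixes x e :: real assumes "x \<ge> 0" "e \<ge> 0"
  shows "ennreal x * ennreal e + ennreal x * ennreal e = ennreal (2 * x * e)"
proof -
  have "ennreal x * ennreal e + ennreal x * ennreal e = ennreal (x * e) + ennreal (x * e)"
    using assms by (simp add: ennreal_mult)
  also have "\<dots> = ennreal (x * e + x * e)" by (rule ennreal_plus[symmetric]) (use assms in auto)
  also have "x * e + x * e = 2 * x * e" by simp
  finally show ?thesis .
qed

lemma sd_sq_le: "V > 0 \<Longrightarrow> A0 > 0 \<Longrightarrow> (sd_of V A0)^2 \<le> V"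
  by (simp add: sd_sq pos_divide_le_eq mult.commute)

lemma bad2:
  assumes V: "V > 0" and a: "a > 0" and b0: "b0 > 0" and n: "n \<ge> 1" and A0: "A0 > 0"
    and K1: "K1 \<ge> 0" and K2: "K2 \<ge> 0" and DM: "Delta Y n \<le> real n * M"
  shows "(\<integral>\<^sup>+y. ennreal (gibbs_density V a b0 Y n (A0, 0, \<lambda>_. Ybar Y n) y *
            ((if real n * (fst (snd y) - Ybar Y n)^2 \<le> K1^2 then 1 else 0) *
             (if (Sstat V Y n A0 (snd y))^2 > K2^2 * real n then 1 else 0))) \<partial>state_space n)
        \<le> ennreal (2 * exp (V * (M + K1^2)) * exp (- K2))"
proof -
  define s0 where "s0 = sd_of V A0"
  have s0p: "s0 > 0" unfolding s0_def using V A0 by (rule sd_pos)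
  have sg: "sqrt (A0 / real n) > 0" using A0 n by simp
  have nr: "real n > 0" using n by simp
  define gd where "gd = (\<lambda>z::real \<times> (nat \<Rightarrow> real). if real n * (fst z - Ybar Y n)^2 \<le> K1^2 then (1::real) else 0)"
  define H where "H = (\<lambda>z::real \<times> (nat \<Rightarrow> real). gd z *
      ((exp (Sstat V Y n A0 z / sqrt (real n)) + exp (- (Sstat V Y n A0 z / sqrt (real n)))) * exp (- K2)))"
  have gdnn: "gd z \<ge> 0" for z unfolding gd_def by simp
  have Hnn: "H z \<ge> 0" for z unfolding H_def using gdnn[of z] by simp
  have gdm[measurable]: "gd \<in> borel_measurable (lborel \<Otimes>\<^sub>M PM n)" unfolding gd_def by measurable
  have Hm: "H \<in> borel_measurable (lborel \<Otimes>\<^sub>M PM n)" unfolding H_def by measurable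
  define B where "B = 2 * exp (V * (M + K1^2)) * exp (- K2)"
  have "(\<integral>\<^sup>+y. ennreal (gibbs_density V a b0 Y n (A0, 0, \<lambda>_. Ybar Y n) y *
            ((if real n * (fst (snd y) - Ybar Y n)^2 \<le> K1^2 then 1 else 0) *
             (if (Sstat V Y n A0 (snd y))^2 > K2^2 * real n then 1 else 0))) \<partial>state_space n)
      \<le> (\<integral>\<^sup>+y. ennreal (gibbs_density V a b0 Y n (A0, 0, \<lambda>_. Ybar Y n) y * H (snd y)) \<partial>state_space n)"
  proof (intro nn_integral_mono ennreal_leI mult_left_mono)
    fix y :: state
    define S where "S = Sstat V Y n A0 (snd y)"
    have eq: "(S / sqrt (real n))^2 > K2^2 \<longleftrightarrow> S^2 > K2^2 * real n"
      using nr by (simp add: power_divide pos_less_divide_eq)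
    have "(if S^2 > K2^2 * real n then 1 else 0) \<le> (exp (S / sqrt (real n)) + exp (- (S / sqrt (real n)))) * exp (- K2)"
      using markov_ind[OF K2, of "S / sqrt (real n)"] unfolding eq .
    moreover have "0 \<le> gd (snd y)" by (rule gdnn)
    ultimately show "(if real n * (fst (snd y) - Ybar Y n)^2 \<le> K1^2 then 1 else 0) *
             (if (Sstat V Y n A0 (snd y))^2 > K2^2 * real n then 1 else 0) \<le> H (snd y)"
      unfolding H_def S_def gd_def by (auto simp: mult_left_mono)
    show "0 \<le> gibbs_density V a b0 Y n (A0, 0, \<lambda>_. Ybar Y n) y" by (rule gd_nonneg[OF a b0 n])
  qed
  also have "\<dots> = (\<integral>\<^sup>+\<mu>'. ennreal (normal_density (Ybar Y n) (sqrt (A0 / real n)) \<mu>') *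
          (\<integral>\<^sup>+\<theta>'. ennreal ((\<Prod>i<n. normal_density (m_of V Y n A0 i \<mu>') (sd_of V A0) (\<theta>' i)) * H (\<mu>',\<theta>')) \<partial>PM n) \<partial>lborel)"
    by (rule red0[OF Hm Hnn a b0 n])
  also have "\<dots> \<le> (\<integral>\<^sup>+\<mu>'. ennreal (normal_density (Ybar Y n) (sqrt (A0 / real n)) \<mu>') * ennreal B \<partial>lborel)"
  proof (intro nn_integral_mono mult_left_mono)
    fix \<mu>' :: real
    define P where "P = (\<lambda>\<theta>'. \<Prod>i<n. normal_density (m_of V Y n A0 i \<mu>') s0 (\<theta>' i))"
    have Pnn: "P \<theta>' \<ge> 0" for \<theta>' unfolding P_def by (simp add: prod_nonneg)
    have Pm[measurable]: "P \<in> borel_measurable (PM n)" unfolding P_def normal_density_def m_of_def by measurable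
    show "(\<integral>\<^sup>+\<theta>'. ennreal ((\<Prod>i<n. normal_density (m_of V Y n A0 i \<mu>') (sd_of V A0) (\<theta>' i)) * H (\<mu>',\<theta>')) \<partial>PM n) \<le> ennreal B"
    proof (cases "real n * (\<mu>' - Ybar Y n)^2 \<le> K1^2")
      case False
      hence "H (\<mu>', \<theta>') = 0" for \<theta>' unfolding H_def gd_def by simp
      thus ?thesis by simp
    next
      case True
      define E where "E = exp (s0^2 * (\<Sum>i<n. (Y n i - \<mu>')^2) / (2 * real n))"
      have EB: "E \<le> exp (V * (M + K1^2))"
      proof -
        have cs: "(\<Sum>i<n. (Y n i - \<mu>')^2) \<le> real n * (2 * (M + K1^2))" by (rule csum_bound[OF n DM True])
        have c0: "(\<Sum>i<n. (Y n i - \<mu>')^2) \<ge> 0" by (simp add: sum_nonneg)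
        have "s0^2 * (\<Sum>i<n. (Y n i - \<mu>')^2) \<le> V * (real n * (2 * (M + K1^2)))"
          using sd_sq_le[OF V A0] cs c0 V unfolding s0_def by (intro mult_mono) auto
        hence "s0^2 * (\<Sum>i<n. (Y n i - \<mu>')^2) / (2 * real n) \<le> V * (real n * (2 * (M + K1^2))) / (2 * real n)"
          using nr by (intro divide_right_mono) auto
        also have "\<dots> = V * (M + K1^2)" using nr by simp
        finally show ?thesis unfolding E_def by simp
      qed
      have pl: "(\<integral>\<^sup>+\<theta>'. ennreal (P \<theta>' * exp (1 * Sstat V Y n A0 (\<mu>', \<theta>') / sqrt (real n))) \<partial>PM n) = ennreal E"
        unfolding P_def E_def by (rule inner_S[OF s0p _ n]) simp
      have mi: "(\<integral>\<^sup>+\<theta>'. ennreal (P \<theta>' * exp ((-1) * Sstat V Y n A0 (\<mu>', \<theta>') / sqrt (real n))) \<partial>PM n) = ennreal E"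
        unfolding P_def E_def by (rule inner_S[OF s0p _ n]) simp
      have "(\<integral>\<^sup>+\<theta>'. ennreal ((\<Prod>i<n. normal_density (m_of V Y n A0 i \<mu>') (sd_of V A0) (\<theta>' i)) * H (\<mu>',\<theta>')) \<partial>PM n)
          = (\<integral>\<^sup>+\<theta>'. ennreal (P \<theta>' * exp (1 * Sstat V Y n A0 (\<mu>', \<theta>') / sqrt (real n))) * ennreal (exp (- K2))
              + ennreal (P \<theta>' * exp ((-1) * Sstat V Y n A0 (\<mu>', \<theta>') / sqrt (real n))) * ennreal (exp (- K2)) \<partial>PM n)"
      proof (intro nn_integral_cong)
        fix \<theta>'
        have "(\<Prod>i<n. normal_density (m_of V Y n A0 i \<mu>') (sd_of V A0) (\<theta>' i)) * H (\<mu>',\<theta>')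
           = P \<theta>' * exp (1 * Sstat V Y n A0 (\<mu>', \<theta>') / sqrt (real n)) * exp (- K2)
             + P \<theta>' * exp ((-1) * Sstat V Y n A0 (\<mu>', \<theta>') / sqrt (real n)) * exp (- K2)"
        proof -
          have g1: "gd (\<mu>', \<theta>') = 1" using True by (simp add: gd_def)
          have x1: "exp (1 * Sstat V Y n A0 (\<mu>', \<theta>') / sqrt (real n)) = exp (Sstat V Y n A0 (\<mu>', \<theta>') / sqrt (real n))" by simp
          have x2: "exp ((-1) * Sstat V Y n A0 (\<mu>', \<theta>') / sqrt (real n)) = exp (- (Sstat V Y n A0 (\<mu>', \<theta>') / sqrt (real n)))" by simp
          have pp: "(\<Prod>i<n. normal_density (m_of V Y n A0 i \<mu>') (sd_of V A0) (\<theta>' i)) = P \<theta>'" unfolding P_def s0_def ..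
          show ?thesis unfolding x1 x2 pp H_def g1 by (rule ring_aux)
        qed
        thus "ennreal ((\<Prod>i<n. normal_density (m_of V Y n A0 i \<mu>') (sd_of V A0) (\<theta>' i)) * H (\<mu>',\<theta>'))
          = ennreal (P \<theta>' * exp (1 * Sstat V Y n A0 (\<mu>', \<theta>') / sqrt (real n))) * ennreal (exp (- K2))
              + ennreal (P \<theta>' * exp ((-1) * Sstat V Y n A0 (\<mu>', \<theta>') / sqrt (real n))) * ennreal (exp (- K2))"
          using Pnn[of \<theta>'] by (simp only: enn_split2 mult_nonneg_nonneg exp_ge_zero)
      qed
      also have "\<dots> = (\<integral>\<^sup>+\<theta>'. ennreal (P \<theta>' * exp (1 * Sstat V Y n A0 (\<mu>', \<theta>') / sqrt (real n))) * ennreal (exp (- K2)) \<partial>PM n)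
              + (\<integral>\<^sup>+\<theta>'. ennreal (P \<theta>' * exp ((-1) * Sstat V Y n A0 (\<mu>', \<theta>') / sqrt (real n))) * ennreal (exp (- K2)) \<partial>PM n)"
        by (rule nn_integral_add) measurable
      also have "\<dots> = ennreal E * ennreal (exp (- K2)) + ennreal E * ennreal (exp (- K2))"
      proof -
        have "(\<integral>\<^sup>+\<theta>'. ennreal (P \<theta>' * exp (1 * Sstat V Y n A0 (\<mu>', \<theta>') / sqrt (real n))) * ennreal (exp (- K2)) \<partial>PM n)
            = (\<integral>\<^sup>+\<theta>'. ennreal (P \<theta>' * exp (1 * Sstat V Y n A0 (\<mu>', \<theta>') / sqrt (real n))) \<partial>PM n) * ennreal (exp (- K2))"
          by (rule nn_integral_multc) measurable
        moreover have "(\<integral>\<^sup>+\<theta>'. ennreal (P \<theta>' * exp ((-1) * Sstat V Y n A0 (\<mu>', \<theta>') / sqrt (real n))) * ennreal (exp (- K2)) \<partial>PM n)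
            = (\<integral>\<^sup>+\<theta>'. ennreal (P \<theta>' * exp ((-1) * Sstat V Y n A0 (\<mu>', \<theta>') / sqrt (real n))) \<partial>PM n) * ennreal (exp (- K2))"
          by (rule nn_integral_multc) measurable
        ultimately show ?thesis unfolding pl mi by simp
      qed
      also have "\<dots> = ennreal (2 * E * exp (- K2))"
        by (rule enn_double) (simp_all add: E_def)
      also have "\<dots> \<le> ennreal B" unfolding B_def using EB by (intro ennreal_leI) simp
      finally show ?thesis .
    qed
  qed simp
  also have "\<dots> = (\<integral>\<^sup>+\<mu>'. ennreal (normal_density (Ybar Y n) (sqrt (A0 / real n)) \<mu>') \<partial>lborel) * ennreal B"
    by (rule nn_integral_multc) (unfold normal_density_def, measurable)
  also have "\<dots> = ennreal B" using nd_mass[OF sg] by simp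
  finally show ?thesis unfolding B_def .
qed


definition Wstat :: "real \<Rightarrow> (nat \<Rightarrow> nat \<Rightarrow> real) \<Rightarrow> nat \<Rightarrow> real \<Rightarrow> real \<times> (nat \<Rightarrow> real) \<Rightarrow> real" where
  "Wstat V Y n A0 z = (\<Sum>i<n. (snd z i - m_of V Y n A0 i (fst z))^2 - (sd_of V A0)^2)"

lemma Wstat_meas[measurable]: "Wstat V Y n A0 \<in> borel_measurable (lborel \<Otimes>\<^sub>M PM n)"
  unfolding Wstat_def m_of_def sd_of_def by measurable

lemma q_bound:
  fixes x c0 :: real assumes x: "\<bar>x\<bar> \<le> 1/2" and c0: "c0 = x / 2"
  shows "exp (- c0) / sqrt (1 - x) \<le> exp (x^2)"
proof -
  have p: "1 - x > 0" using x by linarith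
  have "\<bar>ln (1 + (- x)) - (- x)\<bar> \<le> 2 * (- x)^2" using x by (intro abs_ln_one_plus_x_minus_x_bound) simp
  hence l: "- ln (1 - x) \<le> x + 2 * x^2" by (simp add: abs_le_iff)
  have s: "sqrt (1 - x) = exp (ln (1 - x) / 2)"
  proof -
    have "sqrt (1 - x) = (1 - x) powr (1/2)" using p by (simp add: powr_half_sqrt)
    also have "\<dots> = exp (ln (1 - x) / 2)" using p by (simp add: powr_def)
    finally show ?thesis .
  qed
  have "exp (- c0) / sqrt (1 - x) = exp (- c0 - ln (1 - x) / 2)" unfolding s by (simp add: exp_diff)
  also have "\<dots> \<le> exp (x^2)" using l c0 by simp
  finally show ?thesis .
qed

lemma inner_W:
  assumes V: "V > 0" and A0: "A0 > 0" and c: "2 * c * (sd_of V A0)^2 < 1"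
  shows "(\<integral>\<^sup>+\<theta>'. ennreal ((\<Prod>i<n. normal_density (m_of V Y n A0 i \<mu>') (sd_of V A0) (\<theta>' i)) * exp (c * Wstat V Y n A0 (\<mu>', \<theta>'))) \<partial>PM n)
       = ennreal ((exp (- (c * (sd_of V A0)^2)) * (1 / sqrt (1 - 2 * c * (sd_of V A0)^2)))^n)"
proof -
  define s0 where "s0 = sd_of V A0"
  have s0p: "s0 > 0" unfolding s0_def using V A0 by (rule sd_pos)
  have c': "2 * c * s0^2 < 1" using c unfolding s0_def .
  define m0 where "m0 = (\<lambda>i. m_of V Y n A0 i \<mu>')"
  define q where "q = exp (- (c * s0^2)) * (1 / sqrt (1 - 2 * c * s0^2))"
  have qnn: "q \<ge> 0" unfolding q_def using c' by (intro mult_nonneg_nonneg) auto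
  have e: "exp (c * Wstat V Y n A0 (\<mu>', \<theta>')) = (\<Prod>i<n. exp (c * ((\<theta>' i - m0 i)^2 - s0^2)))" for \<theta>'
    unfolding Wstat_def m0_def s0_def by (simp add: sum_distrib_left exp_sum)
  have "(\<integral>\<^sup>+\<theta>'. ennreal ((\<Prod>i<n. normal_density (m_of V Y n A0 i \<mu>') (sd_of V A0) (\<theta>' i)) * exp (c * Wstat V Y n A0 (\<mu>', \<theta>'))) \<partial>PM n)
      = (\<integral>\<^sup>+\<theta>'. ennreal ((\<Prod>i<n. normal_density (m0 i) s0 (\<theta>' i)) * (\<Prod>i<n. (\<lambda>i t. exp (c * ((t - m0 i)^2 - s0^2))) i (\<theta>' i))) \<partial>PM n)"
    unfolding e m0_def s0_def by simp
  also have "\<dots> = (\<Prod>i<n. \<integral>\<^sup>+t. ennreal (normal_density (m0 i) s0 t * exp (c * ((t - m0 i)^2 - s0^2))) \<partial>lborel)"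
    by (rule theta_prod) auto
  also have "\<dots> = (\<Prod>i<n. ennreal q)"
  proof (intro prod.cong refl)
    fix i
    have "(\<integral>\<^sup>+t. ennreal (normal_density (m0 i) s0 t * exp (c * ((t - m0 i)^2 - s0^2))) \<partial>lborel)
        = (\<integral>\<^sup>+t. ennreal (normal_density (m0 i) s0 t * exp (c * (t - m0 i)^2)) * ennreal (exp (- (c * s0^2))) \<partial>lborel)"
    proof (intro nn_integral_cong)
      fix t
      have "normal_density (m0 i) s0 t * exp (c * ((t - m0 i)^2 - s0^2))
          = normal_density (m0 i) s0 t * exp (c * (t - m0 i)^2) * exp (- (c * s0^2))"
        by (simp add: right_diff_distrib exp_diff exp_minus field_simps)
      thus "ennreal (normal_density (m0 i) s0 t * exp (c * ((t - m0 i)^2 - s0^2)))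
          = ennreal (normal_density (m0 i) s0 t * exp (c * (t - m0 i)^2)) * ennreal (exp (- (c * s0^2)))"
        by (simp add: ennreal_mult[symmetric])
    qed
    also have "\<dots> = (\<integral>\<^sup>+t. ennreal (normal_density (m0 i) s0 t * exp (c * (t - m0 i)^2)) \<partial>lborel) * ennreal (exp (- (c * s0^2)))"
      by (rule nn_integral_multc) (unfold normal_density_def, measurable)
    also have "\<dots> = ennreal (1 / sqrt (1 - 2 * c * s0^2)) * ennreal (exp (- (c * s0^2)))"
      by (simp only: nd_quad_mass[OF s0p c'])
    also have "\<dots> = ennreal q" unfolding q_def using c'
      by (simp add: ennreal_mult[symmetric] mult.commute)
    finally show "(\<integral>\<^sup>+t. ennreal (normal_density (m0 i) s0 t * exp (c * ((t - m0 i)^2 - s0^2))) \<partial>lborel) = ennreal q" .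
  qed
  also have "\<dots> = ennreal (q ^ n)" using qnn by (simp add: ennreal_power)
  finally show ?thesis unfolding q_def s0_def .
qed

lemma inner_W_bound:
  assumes V: "V > 0" and A0: "A0 > 0" and n: "n \<ge> 1" and sg: "sg^2 = 1"
  defines "c \<equiv> sg / (4 * V * sqrt (real n))"
  shows "2 * c * (sd_of V A0)^2 < 1"
    and "(exp (- (c * (sd_of V A0)^2)) * (1 / sqrt (1 - 2 * c * (sd_of V A0)^2)))^n \<le> exp (1/4)"
proof -
  define s2 where "s2 = (sd_of V A0)^2"
  have s2: "0 \<le> s2" "s2 \<le> V" unfolding s2_def using sd_sq_le[OF V A0] by auto
  have nr: "real n \<ge> 1" using n by simp
  define x where "x = 2 * c * s2"
  have x2: "x^2 = s2^2 / (4 * V^2 * real n)"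
    unfolding x_def c_def using V nr sg by (simp add: power_mult_distrib power_divide field_simps)
  have x2b: "x^2 \<le> 1 / (4 * real n)"
  proof -
    have "s2^2 \<le> V^2" using s2 by (intro power_mono) auto
    hence "s2^2 / (4 * V^2 * real n) \<le> V^2 / (4 * V^2 * real n)" using V nr by (intro divide_right_mono) auto
    also have "\<dots> = 1 / (4 * real n)" using V by simp
    finally show ?thesis unfolding x2 .
  qed
  have x2c: "x^2 \<le> (1/2)^2"
  proof -
    have "1 / (4 * real n) \<le> 1 / 4" using nr by (intro frac_le) auto
    thus ?thesis using x2b by (simp add: power2_eq_square)
  qed
  have "\<bar>x\<bar> \<le> \<bar>1/2\<bar>" using x2c abs_le_square_iff by blast
  hence xa: "\<bar>x\<bar> \<le> 1/2" by simp
  show "2 * c * (sd_of V A0)^2 < 1" using xa unfolding x_def s2_def by linarith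
  have qb: "exp (- (c * s2)) * (1 / sqrt (1 - x)) \<le> exp (x^2)"
    using q_bound[OF xa, of "c * s2"] unfolding x_def by simp
  have qn: "0 \<le> exp (- (c * s2)) * (1 / sqrt (1 - x))" using xa by (intro mult_nonneg_nonneg) auto
  have "(exp (- (c * s2)) * (1 / sqrt (1 - x)))^n \<le> (exp (x^2))^n" by (rule power_mono[OF qb qn])
  also have "\<dots> = exp (real n * x^2)" by (simp add: exp_of_nat_mult[symmetric])
  also have "\<dots> \<le> exp (1/4)"
  proof -
    have "real n * x^2 \<le> real n * (1 / (4 * real n))" using x2b nr by (intro mult_left_mono) auto
    also have "\<dots> = 1/4" using nr by simp
    finally show ?thesis by simp
  qed
  finally show "(exp (- (c * (sd_of V A0)^2)) * (1 / sqrt (1 - 2 * c * (sd_of V A0)^2)))^n \<le> exp (1/4)"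
    unfolding x_def s2_def .
qed

lemma ring_aux2: fixes p a b e :: real shows "p * ((a + b) * e) = p * a * e + p * b * e"
  by (simp add: algebra_simps)

lemma bad3:
  assumes V: "V > 0" and a: "a > 0" and b0: "b0 > 0" and n: "n \<ge> 1" and A0: "A0 > 0" and K3: "K3 \<ge> 0"
  shows "(\<integral>\<^sup>+y. ennreal (gibbs_density V a b0 Y n (A0, 0, \<lambda>_. Ybar Y n) y *
            (if (Wstat V Y n A0 (snd y))^2 > K3^2 * real n then 1 else 0)) \<partial>state_space n)
        \<le> ennreal (2 * exp (1/4) * exp (- (K3 / (4 * V))))"
proof -
  have sg: "sqrt (A0 / real n) > 0" using A0 n by simp
  have nr: "real n > 0" using n by simp
  define c1 where "c1 = 1 / (4 * V * sqrt (real n))"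
  define c2 where "c2 = (-1) / (4 * V * sqrt (real n))"
  define e where "e = exp (- (K3 / (4 * V)))"
  define H where "H = (\<lambda>z::real \<times> (nat \<Rightarrow> real). (exp (c1 * Wstat V Y n A0 z) + exp (c2 * Wstat V Y n A0 z)) * e)"
  have Hnn: "H z \<ge> 0" for z unfolding H_def e_def by simp
  have Hm: "H \<in> borel_measurable (lborel \<Otimes>\<^sub>M PM n)" unfolding H_def by measurable
  define B where "B = 2 * exp (1/4) * e"
  have "(\<integral>\<^sup>+y. ennreal (gibbs_density V a b0 Y n (A0, 0, \<lambda>_. Ybar Y n) y *
            (if (Wstat V Y n A0 (snd y))^2 > K3^2 * real n then 1 else 0)) \<partial>state_space n)
      \<le> (\<integral>\<^sup>+y. ennreal (gibbs_density V a b0 Y n (A0, 0, \<lambda>_. Ybar Y n) y * H (snd y)) \<partial>state_space n)"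
  proof (intro nn_integral_mono ennreal_leI mult_left_mono)
    fix y :: state
    define W where "W = Wstat V Y n A0 (snd y)"
    have K: "K3 / (4 * V) \<ge> 0" using K3 V by simp
    define D where "D = 16 * V^2 * real n"
    have Dp: "D > 0" unfolding D_def using V nr by simp
    have eA: "(c1 * W)^2 = W^2 / D" unfolding c1_def D_def using nr
      by (simp add: power_mult_distrib power_divide)
    have eB: "(K3 / (4 * V))^2 = (K3^2 * real n) / D" unfolding D_def using nr V
      by (simp add: power_divide)
    have divless: "\<And>a b. (b / D < a / D) = (b < a)" using Dp by (simp add: divide_less_cancel)
    have eq: "(c1 * W)^2 > (K3 / (4 * V))^2 \<longleftrightarrow> W^2 > K3^2 * real n"
      unfolding eA eB divless ..
    have c2e: "c2 * W = - (c1 * W)" unfolding c1_def c2_def by simp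
    show "(if (Wstat V Y n A0 (snd y))^2 > K3^2 * real n then 1 else 0) \<le> H (snd y)"
      using markov_ind[OF K, of "c1 * W"] unfolding eq H_def e_def W_def[symmetric] c2e .
    show "0 \<le> gibbs_density V a b0 Y n (A0, 0, \<lambda>_. Ybar Y n) y" by (rule gd_nonneg[OF a b0 n])
  qed
  also have "\<dots> = (\<integral>\<^sup>+\<mu>'. ennreal (normal_density (Ybar Y n) (sqrt (A0 / real n)) \<mu>') *
          (\<integral>\<^sup>+\<theta>'. ennreal ((\<Prod>i<n. normal_density (m_of V Y n A0 i \<mu>') (sd_of V A0) (\<theta>' i)) * H (\<mu>',\<theta>')) \<partial>PM n) \<partial>lborel)"
    by (rule red0[OF Hm Hnn a b0 n])
  also have "\<dots> \<le> (\<integral>\<^sup>+\<mu>'. ennreal (normal_density (Ybar Y n) (sqrt (A0 / real n)) \<mu>') * ennreal B \<partial>lborel)"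
  proof (intro nn_integral_mono mult_left_mono)
    fix \<mu>' :: real
    define P where "P = (\<lambda>\<theta>'. \<Prod>i<n. normal_density (m_of V Y n A0 i \<mu>') (sd_of V A0) (\<theta>' i))"
    have Pnn: "P \<theta>' \<ge> 0" for \<theta>' unfolding P_def by (simp add: prod_nonneg)
    have Pm[measurable]: "P \<in> borel_measurable (PM n)" unfolding P_def normal_density_def m_of_def by measurable
    have i1: "(\<integral>\<^sup>+\<theta>'. ennreal (P \<theta>' * exp (c1 * Wstat V Y n A0 (\<mu>', \<theta>'))) \<partial>PM n) \<le> ennreal (exp (1/4))"
    proof -
      have s1: "(1::real)^2 = 1" by simp
      note ib = inner_W_bound[OF V A0 n s1]
      have "(\<integral>\<^sup>+\<theta>'. ennreal (P \<theta>' * exp (c1 * Wstat V Y n A0 (\<mu>', \<theta>'))) \<partial>PM n)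
          = ennreal ((exp (- (c1 * (sd_of V A0)^2)) * (1 / sqrt (1 - 2 * c1 * (sd_of V A0)^2)))^n)"
        unfolding P_def by (rule inner_W[OF V A0]) (use ib(1) c1_def in simp)
      also have "\<dots> \<le> ennreal (exp (1/4))" using ib(2) unfolding c1_def by (intro ennreal_leI) simp
      finally show ?thesis .
    qed
    have i2: "(\<integral>\<^sup>+\<theta>'. ennreal (P \<theta>' * exp (c2 * Wstat V Y n A0 (\<mu>', \<theta>'))) \<partial>PM n) \<le> ennreal (exp (1/4))"
    proof -
      have s1: "(-1::real)^2 = 1" by simp
      note ib = inner_W_bound[OF V A0 n s1]
      have "(\<integral>\<^sup>+\<theta>'. ennreal (P \<theta>' * exp (c2 * Wstat V Y n A0 (\<mu>', \<theta>'))) \<partial>PM n)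
          = ennreal ((exp (- (c2 * (sd_of V A0)^2)) * (1 / sqrt (1 - 2 * c2 * (sd_of V A0)^2)))^n)"
        unfolding P_def by (rule inner_W[OF V A0]) (use ib(1) c2_def in simp)
      also have "\<dots> \<le> ennreal (exp (1/4))" using ib(2) unfolding c2_def by (intro ennreal_leI) simp
      finally show ?thesis .
    qed
    have "(\<integral>\<^sup>+\<theta>'. ennreal ((\<Prod>i<n. normal_density (m_of V Y n A0 i \<mu>') (sd_of V A0) (\<theta>' i)) * H (\<mu>',\<theta>')) \<partial>PM n)
        = (\<integral>\<^sup>+\<theta>'. ennreal (P \<theta>' * exp (c1 * Wstat V Y n A0 (\<mu>', \<theta>'))) * ennreal e
            + ennreal (P \<theta>' * exp (c2 * Wstat V Y n A0 (\<mu>', \<theta>'))) * ennreal e \<partial>PM n)"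
    proof (intro nn_integral_cong)
      fix \<theta>'
      have "(\<Prod>i<n. normal_density (m_of V Y n A0 i \<mu>') (sd_of V A0) (\<theta>' i)) * H (\<mu>',\<theta>')
         = P \<theta>' * exp (c1 * Wstat V Y n A0 (\<mu>', \<theta>')) * e + P \<theta>' * exp (c2 * Wstat V Y n A0 (\<mu>', \<theta>')) * e"
      proof -
        have pp: "(\<Prod>i<n. normal_density (m_of V Y n A0 i \<mu>') (sd_of V A0) (\<theta>' i)) = P \<theta>'" unfolding P_def ..
        show ?thesis unfolding pp H_def by (rule ring_aux2)
      qed
      thus "ennreal ((\<Prod>i<n. normal_density (m_of V Y n A0 i \<mu>') (sd_of V A0) (\<theta>' i)) * H (\<mu>',\<theta>'))
          = ennreal (P \<theta>' * exp (c1 * Wstat V Y n A0 (\<mu>', \<theta>'))) * ennreal e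
            + ennreal (P \<theta>' * exp (c2 * Wstat V Y n A0 (\<mu>', \<theta>'))) * ennreal e"
        using Pnn[of \<theta>'] unfolding e_def by (simp only: enn_split2 mult_nonneg_nonneg exp_ge_zero)
    qed
    also have "\<dots> = (\<integral>\<^sup>+\<theta>'. ennreal (P \<theta>' * exp (c1 * Wstat V Y n A0 (\<mu>', \<theta>'))) * ennreal e \<partial>PM n)
            + (\<integral>\<^sup>+\<theta>'. ennreal (P \<theta>' * exp (c2 * Wstat V Y n A0 (\<mu>', \<theta>'))) * ennreal e \<partial>PM n)"
      by (rule nn_integral_add) measurable
    also have "\<dots> = (\<integral>\<^sup>+\<theta>'. ennreal (P \<theta>' * exp (c1 * Wstat V Y n A0 (\<mu>', \<theta>'))) \<partial>PM n) * ennreal e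
            + (\<integral>\<^sup>+\<theta>'. ennreal (P \<theta>' * exp (c2 * Wstat V Y n A0 (\<mu>', \<theta>'))) \<partial>PM n) * ennreal e"
    proof -
      have "(\<integral>\<^sup>+\<theta>'. ennreal (P \<theta>' * exp (c1 * Wstat V Y n A0 (\<mu>', \<theta>'))) * ennreal e \<partial>PM n)
          = (\<integral>\<^sup>+\<theta>'. ennreal (P \<theta>' * exp (c1 * Wstat V Y n A0 (\<mu>', \<theta>'))) \<partial>PM n) * ennreal e"
        by (rule nn_integral_multc) measurable
      moreover have "(\<integral>\<^sup>+\<theta>'. ennreal (P \<theta>' * exp (c2 * Wstat V Y n A0 (\<mu>', \<theta>'))) * ennreal e \<partial>PM n)
          = (\<integral>\<^sup>+\<theta>'. ennreal (P \<theta>' * exp (c2 * Wstat V Y n A0 (\<mu>', \<theta>'))) \<partial>PM n) * ennreal e"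
        by (rule nn_integral_multc) measurable
      ultimately show ?thesis by simp
    qed
    also have "\<dots> \<le> ennreal (exp (1/4)) * ennreal e + ennreal (exp (1/4)) * ennreal e"
      by (intro add_mono mult_right_mono i1 i2) auto
    also have "\<dots> = ennreal B" unfolding B_def by (rule enn_double) (simp_all add: e_def)
    finally show "(\<integral>\<^sup>+\<theta>'. ennreal ((\<Prod>i<n. normal_density (m_of V Y n A0 i \<mu>') (sd_of V A0) (\<theta>' i)) * H (\<mu>',\<theta>')) \<partial>PM n) \<le> ennreal B" .
  qed simp
  also have "\<dots> = (\<integral>\<^sup>+\<mu>'. ennreal (normal_density (Ybar Y n) (sqrt (A0 / real n)) \<mu>') \<partial>lborel) * ennreal B"
    by (rule nn_integral_multc) (unfold normal_density_def, measurable)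
  also have "\<dots> = ennreal B" using nd_mass[OF sg] by simp
  finally show ?thesis unfolding B_def e_def .
qed


definition K1c :: "real \<Rightarrow> real" where "K1c M = ln 12 + M / 2"
definition K2c :: "real \<Rightarrow> real \<Rightarrow> real" where "K2c V M = ln 12 + V * (M + (K1c M)^2)"
definition K3c :: "real \<Rightarrow> real" where "K3c V = 4 * V * (ln 12 + 1/4)"

lemma const_bound: fixes X Y :: real assumes "X \<le> Y"
  shows "2 * exp X * exp (- (ln 12 + Y)) \<le> 1/6"
proof -
  have "exp X * exp (- (ln 12 + Y)) = exp (X - Y) * exp (- ln 12)" by (simp add: exp_add[symmetric])
  also have "\<dots> \<le> 1 * exp (- ln 12)" using assms by (intro mult_right_mono) auto
  also have "exp (- ln 12) = (1::real) / 12" by (simp add: exp_minus)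
  finally show ?thesis by simp
qed

lemma G_meas:
  "{y \<in> space (state_space n). real n * (fst (snd y) - Yb)^2 \<le> K1^2 \<and> (Sstat V Y n A0 (snd y))^2 \<le> K2^2 * real n
      \<and> (Wstat V Y n A0 (snd y))^2 \<le> K3^2 * real n} \<in> sets (state_space n)"
proof -
  have [measurable]: "(\<lambda>y::state. Sstat V Y n A0 (snd y)) \<in> borel_measurable (state_space n)"
    unfolding state_space_def by measurable
  have [measurable]: "(\<lambda>y::state. Wstat V Y n A0 (snd y)) \<in> borel_measurable (state_space n)"
    unfolding state_space_def by measurable
  have [measurable]: "(\<lambda>y::state. fst (snd y)) \<in> borel_measurable (state_space n)"
    unfolding state_space_def by measurable
  show ?thesis by measurable
qed

lemma Xset_meas: "Xset n \<in> sets (state_space n)"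
proof -
  have [measurable]: "(\<lambda>y::state. fst y) \<in> borel_measurable (state_space n)"
    unfolding state_space_def by measurable
  show ?thesis unfolding Xset_def by measurable
qed

lemma gd_zero: "fst y \<le> 0 \<Longrightarrow> gibbs_density V a b0 Y n (A, \<mu>, \<theta>) y = 0"
  unfolding gd_unf ig_density_def by simp

lemma Z_bound:
  assumes V: "V > 0" and a: "a > 0" and b0: "b0 > 0" and n: "n \<ge> 1" and A0: "A0 > 0" "A0 \<le> M"
    and DM: "Delta Y n \<le> real n * M" and M: "M > 0"
  defines "G \<equiv> {y \<in> space (state_space n). real n * (fst (snd y) - Ybar Y n)^2 \<le> (K1c M)^2
      \<and> (Sstat V Y n A0 (snd y))^2 \<le> (K2c V M)^2 * real n \<and> (Wstat V Y n A0 (snd y))^2 \<le> (K3c V)^2 * real n}"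
  shows "(\<integral>\<^sup>+y. ennreal (gibbs_density V a b0 Y n (A0, 0, \<lambda>_. Ybar Y n) y) * indicator G y \<partial>state_space n) \<ge> ennreal (1/2)"
    and "(\<integral>\<^sup>+y. ennreal (gibbs_density V a b0 Y n (A0, 0, \<lambda>_. Ybar Y n) y) * indicator G y \<partial>state_space n) \<le> 1"
proof -
  define g where "g = (\<lambda>y. gibbs_density V a b0 Y n (A0, 0, \<lambda>_. Ybar Y n) y)"
  have gm[measurable]: "g \<in> borel_measurable (state_space n)" unfolding g_def by (rule gd_meas)
  have gnn: "g y \<ge> 0" for y unfolding g_def by (rule gd_nonneg[OF a b0 n])
  have Gm[measurable]: "G \<in> sets (state_space n)" unfolding G_def by (rule G_meas)
  define K1 where "K1 = K1c M"
  define K2 where "K2 = K2c V M"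
  define K3 where "K3 = K3c V"
  have K1p: "K1 \<ge> 0" unfolding K1_def K1c_def using M by simp
  have K2p: "K2 \<ge> 0" unfolding K2_def K2c_def using M V by (simp add: add_nonneg_nonneg)
  have K3p: "K3 \<ge> 0" unfolding K3_def K3c_def using V by simp
  define F1 where "F1 = (\<lambda>y::state. if real n * (fst (snd y) - Ybar Y n)^2 > K1^2 then (1::real) else 0)"
  define F2 where "F2 = (\<lambda>y::state. (if real n * (fst (snd y) - Ybar Y n)^2 \<le> K1^2 then (1::real) else 0) *
             (if (Sstat V Y n A0 (snd y))^2 > K2^2 * real n then 1 else 0))"
  define F3 where "F3 = (\<lambda>y::state. if (Wstat V Y n A0 (snd y))^2 > K3^2 * real n then (1::real) else 0)"
  have ssm[measurable]: "(\<lambda>y::state. Sstat V Y n A0 (snd y)) \<in> borel_measurable (state_space n)"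
    "(\<lambda>y::state. Wstat V Y n A0 (snd y)) \<in> borel_measurable (state_space n)"
    "(\<lambda>y::state. fst (snd y)) \<in> borel_measurable (state_space n)"
    unfolding state_space_def by measurable
  have F1m[measurable]: "F1 \<in> borel_measurable (state_space n)" unfolding F1_def by measurable
  have F2m[measurable]: "F2 \<in> borel_measurable (state_space n)" unfolding F2_def by measurable
  have F3m[measurable]: "F3 \<in> borel_measurable (state_space n)" unfolding F3_def by measurable
  have Fnn: "F1 y \<ge> 0" "F2 y \<ge> 0" "F3 y \<ge> 0" for y unfolding F1_def F2_def F3_def by auto
  define Z where "Z = (\<integral>\<^sup>+y. ennreal (g y) * indicator G y \<partial>state_space n)"
  have b1: "(\<integral>\<^sup>+y. ennreal (g y * F1 y) \<partial>state_space n) \<le> ennreal (1/6)"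
  proof -
    have "(\<integral>\<^sup>+y. ennreal (g y * F1 y) \<partial>state_space n) \<le> ennreal (2 * exp (A0 / 2) * exp (- K1))"
      unfolding g_def F1_def by (rule bad1[OF V a b0 n A0(1) K1p])
    also have "\<dots> \<le> ennreal (1/6)" unfolding K1_def K1c_def
      by (intro ennreal_leI const_bound) (use A0 in simp)
    finally show ?thesis .
  qed
  have b2: "(\<integral>\<^sup>+y. ennreal (g y * F2 y) \<partial>state_space n) \<le> ennreal (1/6)"
  proof -
    have "(\<integral>\<^sup>+y. ennreal (g y * F2 y) \<partial>state_space n) \<le> ennreal (2 * exp (V * (M + K1^2)) * exp (- K2))"
      unfolding g_def F2_def by (rule bad2[OF V a b0 n A0(1) K1p K2p DM])
    also have "\<dots> \<le> ennreal (1/6)" unfolding K2_def K2c_def K1_def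
      by (intro ennreal_leI const_bound) simp
    finally show ?thesis .
  qed
  have b3: "(\<integral>\<^sup>+y. ennreal (g y * F3 y) \<partial>state_space n) \<le> ennreal (1/6)"
  proof -
    have "(\<integral>\<^sup>+y. ennreal (g y * F3 y) \<partial>state_space n) \<le> ennreal (2 * exp (1/4) * exp (- (K3 / (4 * V))))"
      unfolding g_def F3_def by (rule bad3[OF V a b0 n A0(1) K3p])
    also have "K3 / (4 * V) = ln 12 + 1/4" unfolding K3_def K3c_def using V by simp
    also have "ennreal (2 * exp (1/4) * exp (- (ln 12 + 1/4))) \<le> ennreal (1/6)"
      by (intro ennreal_leI const_bound) simp
    finally show ?thesis .
  qed
  have tot: "(\<integral>\<^sup>+y. ennreal (g y) \<partial>state_space n) = 1"
    unfolding g_def by (rule total_mass[OF V a b0 n A0(1)])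
  have pt: "ennreal (g y) \<le> ennreal (g y) * indicator G y + ennreal (g y * F1 y) + ennreal (g y * F2 y) + ennreal (g y * F3 y)"
    if y: "y \<in> space (state_space n)" for y
  proof (cases "y \<in> G")
    case True thus ?thesis by simp
  next
    case False
    hence "\<not> (real n * (fst (snd y) - Ybar Y n)^2 \<le> K1^2 \<and> (Sstat V Y n A0 (snd y))^2 \<le> K2^2 * real n
      \<and> (Wstat V Y n A0 (snd y))^2 \<le> K3^2 * real n)" using y unfolding G_def K1_def K2_def K3_def by auto
    hence "1 \<le> F1 y + F2 y + F3 y" unfolding F1_def F2_def F3_def by auto
    hence "g y * 1 \<le> g y * (F1 y + F2 y + F3 y)" using gnn[of y] by (intro mult_left_mono) auto
    hence "ennreal (g y) \<le> ennreal (g y * F1 y + g y * F2 y + g y * F3 y)" by (intro ennreal_leI) (simp add: algebra_simps)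
    also have "\<dots> = ennreal (g y * F1 y) + ennreal (g y * F2 y) + ennreal (g y * F3 y)"
      using gnn[of y] Fnn[of y] by (simp add: ennreal_plus add_nonneg_nonneg)
    finally show ?thesis by (simp add: add.assoc add_increasing)
  qed
  have "1 \<le> (\<integral>\<^sup>+y. ennreal (g y) * indicator G y + ennreal (g y * F1 y) + ennreal (g y * F2 y) + ennreal (g y * F3 y) \<partial>state_space n)"
    unfolding tot[symmetric] by (rule nn_integral_mono) (rule pt)
  also have "\<dots> = Z + (\<integral>\<^sup>+y. ennreal (g y * F1 y) \<partial>state_space n) + (\<integral>\<^sup>+y. ennreal (g y * F2 y) \<partial>state_space n)
       + (\<integral>\<^sup>+y. ennreal (g y * F3 y) \<partial>state_space n)"
  proof -
    have m0: "(\<lambda>y. ennreal (g y) * indicator G y) \<in> borel_measurable (state_space n)" by measurable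
    have m1: "(\<lambda>y. ennreal (g y * F1 y)) \<in> borel_measurable (state_space n)" by measurable
    have m2: "(\<lambda>y. ennreal (g y * F2 y)) \<in> borel_measurable (state_space n)" by measurable
    have m3: "(\<lambda>y. ennreal (g y * F3 y)) \<in> borel_measurable (state_space n)" by measurable
    have m01: "(\<lambda>y. ennreal (g y) * indicator G y + ennreal (g y * F1 y)) \<in> borel_measurable (state_space n)" by measurable
    have m012: "(\<lambda>y. ennreal (g y) * indicator G y + ennreal (g y * F1 y) + ennreal (g y * F2 y)) \<in> borel_measurable (state_space n)" by measurable
    have "(\<integral>\<^sup>+y. ennreal (g y) * indicator G y + ennreal (g y * F1 y) + ennreal (g y * F2 y) + ennreal (g y * F3 y) \<partial>state_space n)
        = (\<integral>\<^sup>+y. ennreal (g y) * indicator G y + ennreal (g y * F1 y) + ennreal (g y * F2 y) \<partial>state_space n) + (\<integral>\<^sup>+y. ennreal (g y * F3 y) \<partial>state_space n)"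
      by (rule nn_integral_add[OF m012 m3])
    also have "(\<integral>\<^sup>+y. ennreal (g y) * indicator G y + ennreal (g y * F1 y) + ennreal (g y * F2 y) \<partial>state_space n)
        = (\<integral>\<^sup>+y. ennreal (g y) * indicator G y + ennreal (g y * F1 y) \<partial>state_space n) + (\<integral>\<^sup>+y. ennreal (g y * F2 y) \<partial>state_space n)"
      by (rule nn_integral_add[OF m01 m2])
    also have "(\<integral>\<^sup>+y. ennreal (g y) * indicator G y + ennreal (g y * F1 y) \<partial>state_space n)
        = Z + (\<integral>\<^sup>+y. ennreal (g y * F1 y) \<partial>state_space n)"
      unfolding Z_def by (rule nn_integral_add[OF m0 m1])
    finally show ?thesis .
  qed
  also have "\<dots> \<le> Z + ennreal (1/6) + ennreal (1/6) + ennreal (1/6)"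
    by (intro add_mono b1 b2 b3 order_refl)
  also have "Z + ennreal (1/6) + ennreal (1/6) + ennreal (1/6) = Z + ennreal (1/2)"
  proof -
    have "ennreal (1/6) + ennreal (1/6) = ennreal (1/6 + 1/6)" by (rule ennreal_plus[symmetric]) auto
    moreover have "ennreal (1/6 + 1/6) + ennreal (1/6) = ennreal (1/6 + 1/6 + 1/6)" by (rule ennreal_plus[symmetric]) auto
    moreover have "(1/6 + 1/6 + 1/6 :: real) = 1/2" by simp
    ultimately show ?thesis by (simp add: add.assoc)
  qed
  finally have Zlow: "1 \<le> Z + ennreal (1/2)" .
  have Zup: "Z \<le> 1"
  proof -
    have "Z \<le> (\<integral>\<^sup>+y. ennreal (g y) \<partial>state_space n)" unfolding Z_def
      by (intro nn_integral_mono) (simp add: indicator_def)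
    thus ?thesis using tot by simp
  qed
  have "ennreal (1/2) \<le> Z"
  proof -
    define z where "z = enn2real Z"
    have Zt: "Z \<noteq> \<top>" using Zup by (metis ennreal_one_neq_top neq_top_trans)
    have z: "Z = ennreal z" "z \<ge> 0" unfolding z_def using Zt by (simp_all add: ennreal_enn2real_if)
    have "ennreal z + ennreal (1/2) = ennreal (z + 1/2)" by (rule ennreal_plus[symmetric]) (use z in auto)
    hence "ennreal 1 \<le> ennreal (z + 1/2)" using Zlow z by simp
    hence "1 \<le> z + 1/2" using z by (subst (asm) ennreal_le_iff) auto
    hence "1/2 \<le> z" by simp
    hence "ennreal (1/2) \<le> ennreal z" by (rule ennreal_leI)
    thus ?thesis using z by simp
  qed
  thus "(\<integral>\<^sup>+y. ennreal (gibbs_density V a b0 Y n (A0, 0, \<lambda>_. Ybar Y n) y) * indicator G y \<partial>state_space n) \<ge> ennreal (1/2)"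
    unfolding Z_def g_def by simp
  show "(\<integral>\<^sup>+y. ennreal (gibbs_density V a b0 Y n (A0, 0, \<lambda>_. Ybar Y n) y) * indicator G y \<partial>state_space n) \<le> 1"
    using Zup unfolding Z_def g_def .
qed


lemma level_n:
  assumes V: "V > 0" and a: "a > 0" and b0: "b0 > 0" and \<delta>: "\<delta> > 0" and d: "d > 0" and n2: "n \<ge> 2"
    and hM: "Delta Y n / (real n - 1) \<le> M" and h\<delta>: "V + \<delta> \<le> Delta Y n / (real n - 1)"
    and hN: "d / real n \<le> \<delta>^2 / 4"
  shows "\<exists>Q. prob_space Q \<and> sets Q = sets (state_space n) \<and> emeasure Q (Xset n) = 1 \<and>
              (\<forall>x\<in>Xset n. drift V Y n x \<le> d \<longrightarrow>
                 (\<forall>B\<in>sets (state_space n).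
                    emeasure (gibbs_kernel V a b0 Y n x) B \<ge>
                      ennreal (exp (- Cconst V \<delta> (M + \<delta>) d (K1c M) (K2c V M) (K3c V) M) / 2) * emeasure Q B))"
proof -
  define Mx where "Mx = M + \<delta>"
  define C where "C = Cconst V \<delta> Mx d (K1c M) (K2c V M) (K3c V) M"
  define \<epsilon>0 where "\<epsilon>0 = exp (- C) / 2"
  have n: "n \<ge> 1" using n2 by simp
  have nr: "real n > 0" using n by simp
  have n1: "real n - 1 > 0" using n2 by simp
  define A0 where "A0 = Delta Y n / (real n - 1) - V"
  have A0d: "\<delta> \<le> A0" unfolding A0_def using h\<delta> by simp
  have A0M: "A0 \<le> M" unfolding A0_def using hM V by simp
  have A0p: "A0 > 0" using A0d \<delta> by simp
  have A0Mx: "A0 \<le> Mx" unfolding Mx_def using A0M \<delta> by simp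
  have Mp: "M > 0" using A0M A0p by simp
  have DM: "Delta Y n \<le> real n * M"
  proof -
    have "Delta Y n = Delta Y n / (real n - 1) * (real n - 1)" using n1 by simp
    also have "\<dots> \<le> M * (real n - 1)" using hM n1 by (intro mult_right_mono) auto
    also have "\<dots> \<le> M * real n" using Mp by (intro mult_left_mono) auto
    finally show ?thesis by (simp add: mult.commute)
  qed
  define g0 where "g0 = (\<lambda>y. gibbs_density V a b0 Y n (A0, 0, \<lambda>_. Ybar Y n) y)"
  have g0m[measurable]: "g0 \<in> borel_measurable (state_space n)" unfolding g0_def by (rule gd_meas)
  have g0nn: "g0 y \<ge> 0" for y unfolding g0_def by (rule gd_nonneg[OF a b0 n])
  define G where "G = {y \<in> space (state_space n). real n * (fst (snd y) - Ybar Y n)^2 \<le> (K1c M)^2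
      \<and> (Sstat V Y n A0 (snd y))^2 \<le> (K2c V M)^2 * real n \<and> (Wstat V Y n A0 (snd y))^2 \<le> (K3c V)^2 * real n}"
  have Gm[measurable]: "G \<in> sets (state_space n)" unfolding G_def by (rule G_meas)
  define Z where "Z = (\<integral>\<^sup>+y. ennreal (g0 y) * indicator G y \<partial>state_space n)"
  have Zb: "ennreal (1/2) \<le> Z" "Z \<le> 1"
    using Z_bound[OF V a b0 n A0p A0M DM Mp] unfolding Z_def g0_def G_def by auto
  define z where "z = enn2real Z"
  have Zt: "Z \<noteq> \<top>" using Zb(2) by (metis ennreal_one_neq_top neq_top_trans)
  have Zz: "Z = ennreal z" unfolding z_def using Zt by (simp add: ennreal_enn2real_if)
  have z0: "z \<ge> 0" unfolding z_def by simp
  have zh: "1/2 \<le> z" using Zb(1) unfolding Zz by (subst (asm) ennreal_le_iff) (use z0 in auto)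
  have zp: "z > 0" using zh by simp
  define q where "q = (\<lambda>y. ennreal (g0 y) * indicator G y * ennreal (1 / z))"
  have qm[measurable]: "q \<in> borel_measurable (state_space n)" unfolding q_def by measurable
  define Q where "Q = density (state_space n) q"
  have sQ: "sets Q = sets (state_space n)" unfolding Q_def by simp
  have spQ: "space Q = space (state_space n)" unfolding Q_def by simp
  have intq: "(\<integral>\<^sup>+y. q y \<partial>state_space n) = 1"
  proof -
    have "(\<integral>\<^sup>+y. q y \<partial>state_space n) = Z * ennreal (1 / z)"
      unfolding q_def Z_def by (rule nn_integral_multc) measurable
    also have "\<dots> = ennreal (z * (1 / z))" unfolding Zz using z0 by (simp add: ennreal_mult[symmetric])
    also have "\<dots> = 1" using zp by simp
    finally show ?thesis .
  qed
  have QS: "emeasure Q (space (state_space n)) = 1"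
  proof -
    have "emeasure Q (space (state_space n)) = (\<integral>\<^sup>+y. q y * indicator (space (state_space n)) y \<partial>state_space n)"
      unfolding Q_def by (rule emeasure_density) auto
    also have "\<dots> = (\<integral>\<^sup>+y. q y \<partial>state_space n)" by (intro nn_integral_cong) simp
    finally show ?thesis using intq by simp
  qed
  have probQ: "prob_space Q" by (rule prob_spaceI) (simp add: spQ QS)
  have QX: "emeasure Q (Xset n) = 1"
  proof -
    have "emeasure Q (Xset n) = (\<integral>\<^sup>+y. q y * indicator (Xset n) y \<partial>state_space n)"
      unfolding Q_def by (rule emeasure_density) (auto simp: Xset_meas)
    also have "\<dots> = (\<integral>\<^sup>+y. q y \<partial>state_space n)"
    proof (intro nn_integral_cong)
      fix y assume y: "y \<in> space (state_space n)"
      show "q y * indicator (Xset n) y = q y"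
      proof (cases "fst y > 0")
        case True thus ?thesis using y by (simp add: Xset_def)
      next
        case False
        hence "g0 y = 0" unfolding g0_def by (intro gd_zero) simp
        thus ?thesis unfolding q_def by simp
      qed
    qed
    finally show ?thesis using intq by simp
  qed
  have minor: "emeasure (gibbs_kernel V a b0 Y n x) B \<ge> ennreal \<epsilon>0 * emeasure Q B"
    if x: "x \<in> Xset n" and dr: "drift V Y n x \<le> d" and B: "B \<in> sets (state_space n)" for x B
  proof -
    obtain A \<mu> \<theta> where xe: "x = (A, \<mu>, \<theta>)" by (cases x) auto
    have Ap: "A > 0" using x unfolding xe Xset_def by simp
    have drx: "real n * (thetabar n \<theta> - Ybar Y n)^2 + real n * ((Delta Y n / (real n - 1) - V) - A)^2 \<le> d"
      using dr unfolding xe drift_def by simp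
    have t1: "real n * (thetabar n \<theta> - Ybar Y n)^2 \<ge> 0" "real n * ((Delta Y n / (real n - 1) - V) - A)^2 \<ge> 0"
      by simp_all
    have dth: "real n * (thetabar n \<theta> - Ybar Y n)^2 \<le> d" using drx t1 by linarith
    have dA: "real n * (A - A0)^2 \<le> d"
    proof -
      have "real n * ((Delta Y n / (real n - 1) - V) - A)^2 \<le> d" using drx t1 by linarith
      moreover have "((Delta Y n / (real n - 1) - V) - A)^2 = (A - A0)^2" unfolding A0_def by (simp add: power2_commute)
      ultimately show ?thesis by simp
    qed
    have AA: "\<bar>A - A0\<bar> \<le> \<delta> / 2"
    proof -
      have "(A - A0)^2 \<le> d / real n" using dA nr by (simp add: pos_le_divide_eq mult.commute)
      also have "\<dots> \<le> (\<delta> / 2)^2" using hN by (simp add: power_divide)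
      finally have "\<bar>A - A0\<bar> \<le> \<bar>\<delta> / 2\<bar>" using abs_le_square_iff by blast
      thus ?thesis using \<delta> by simp
    qed
    have AA2: "A0 - A \<le> \<delta> / 2" "A - A0 \<le> \<delta> / 2" using AA unfolding abs_le_iff by linarith+
    have Alo: "\<delta> / 2 \<le> A" using AA2 A0d by linarith
    have Ahi: "A \<le> Mx" using AA2 A0M unfolding Mx_def by linarith
    have K2p: "K2c V M \<ge> 0" unfolding K2c_def using Mp V by (simp add: add_nonneg_nonneg)
    have K3p: "K3c V \<ge> 0" unfolding K3c_def using V by simp
    have pt: "ennreal \<epsilon>0 * q y \<le> ennreal (gibbs_density V a b0 Y n x y)" for y
    proof (cases "y \<in> G")
      case False thus ?thesis unfolding q_def by simp
    next
      case True
      hence G1: "real n * (fst (snd y) - Ybar Y n)^2 \<le> (K1c M)^2"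
        and G2: "(Sstat V Y n A0 (snd y))^2 \<le> (K2c V M)^2 * real n"
        and G3: "(Wstat V Y n A0 (snd y))^2 \<le> (K3c V)^2 * real n" unfolding G_def by auto
      have pw: "gibbs_density V a b0 Y n (A, \<mu>, \<theta>) y \<ge> exp (- C) * g0 y"
        unfolding C_def g0_def
        by (rule pointwise[OF V a b0 \<delta> n A0d A0Mx Alo Ahi dA dth _ DM K2p K3p G1])
           (use d G2 G3 in \<open>simp_all add: Sstat_def Wstat_def\<close>)
      have ez: "\<epsilon>0 * (1 / z) \<le> exp (- C)"
      proof -
        have "1 / z \<le> 2" using zh zp by (simp add: divide_le_eq)
        hence "\<epsilon>0 * (1 / z) \<le> \<epsilon>0 * 2" unfolding \<epsilon>0_def by (intro mult_left_mono) auto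
        thus ?thesis unfolding \<epsilon>0_def by simp
      qed
      have "\<epsilon>0 * (g0 y * (1 / z)) \<le> gibbs_density V a b0 Y n x y"
      proof -
        have "\<epsilon>0 * (g0 y * (1 / z)) = (\<epsilon>0 * (1 / z)) * g0 y" by simp
        also have "\<dots> \<le> exp (- C) * g0 y" using ez g0nn[of y] by (intro mult_right_mono) auto
        also have "\<dots> \<le> gibbs_density V a b0 Y n x y" using pw unfolding xe .
        finally show ?thesis .
      qed
      moreover have "ennreal \<epsilon>0 * q y = ennreal (\<epsilon>0 * (g0 y * (1 / z)))"
        unfolding q_def using True g0nn[of y] zp unfolding \<epsilon>0_def by (simp add: ennreal_mult[symmetric])
      ultimately show ?thesis by (simp add: ennreal_leI)
    qed
    have gm: "(\<lambda>y. ennreal (gibbs_density V a b0 Y n x y)) \<in> borel_measurable (state_space n)"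
      unfolding xe by measurable
    have "ennreal \<epsilon>0 * emeasure Q B = ennreal \<epsilon>0 * (\<integral>\<^sup>+y. q y * indicator B y \<partial>state_space n)"
      unfolding Q_def by (subst emeasure_density) (auto simp: B)
    also have "\<dots> = (\<integral>\<^sup>+y. ennreal \<epsilon>0 * (q y * indicator B y) \<partial>state_space n)"
      by (rule nn_integral_cmult[symmetric]) (use B in measurable)
    also have "\<dots> \<le> (\<integral>\<^sup>+y. ennreal (gibbs_density V a b0 Y n x y) * indicator B y \<partial>state_space n)"
      by (intro nn_integral_mono) (auto simp: indicator_def pt mult.assoc[symmetric])
    also have "\<dots> = emeasure (gibbs_kernel V a b0 Y n x) B"
      unfolding gibbs_kernel_def by (rule emeasure_density[symmetric, OF gm B])
    finally show ?thesis .
  qed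
  show ?thesis
    using probQ sQ QX minor unfolding \<epsilon>0_def C_def Mx_def by blast
qed

theorem mainTheorem3:
  fixes V a b0 :: real and Y :: "nat \<Rightarrow> nat \<Rightarrow> real"
  assumes "V > 0" and "a > 0" and "b0 > 0"
    and assmA: "\<exists>\<delta> M N0. \<delta> > 0 \<and>
                 (\<forall>n\<ge>2. Delta Y n / (real n - 1) \<le> M) \<and>
                 (\<forall>n\<ge>max N0 2. Delta Y n / (real n - 1) \<ge> V + \<delta>)"
  shows "\<forall>d>0. \<exists>\<epsilon>0>0. \<exists>N::nat. \<forall>n\<ge>N. n \<ge> 2 \<longrightarrow>
           (\<exists>Q. prob_space Q \<and> sets Q = sets (state_space n) \<and> emeasure Q (Xset n) = 1 \<and>
              (\<forall>x\<in>Xset n. drift V Y n x \<le> d \<longrightarrow>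
                 (\<forall>B\<in>sets (state_space n).
                    emeasure (gibbs_kernel V a b0 Y n x) B \<ge> ennreal \<epsilon>0 * emeasure Q B)))"
proof (intro allI impI)
  fix d :: real assume d: "d > 0"
  from assmA obtain \<delta> M N0 where \<delta>: "\<delta> > 0" and hM: "\<forall>n\<ge>2. Delta Y n / (real n - 1) \<le> M"
    and h\<delta>: "\<forall>n\<ge>max N0 2. Delta Y n / (real n - 1) \<ge> V + \<delta>" by blast
  define C where "C = Cconst V \<delta> (M + \<delta>) d (K1c M) (K2c V M) (K3c V) M"
  define N where "N = max (max N0 2) (nat \<lceil>4 * d / \<delta>^2\<rceil>)"
  have e0: "exp (- C) / 2 > 0" by simp
  have main: "\<forall>n\<ge>N. n \<ge> 2 \<longrightarrow>
           (\<exists>Q. prob_space Q \<and> sets Q = sets (state_space n) \<and> emeasure Q (Xset n) = 1 \<and>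
              (\<forall>x\<in>Xset n. drift V Y n x \<le> d \<longrightarrow>
                 (\<forall>B\<in>sets (state_space n).
                    emeasure (gibbs_kernel V a b0 Y n x) B \<ge> ennreal (exp (- C) / 2) * emeasure Q B)))"
  proof (intro allI impI)
    fix n :: nat assume nN: "n \<ge> N" and n2: "n \<ge> 2"
    have n0: "n \<ge> max N0 2" using nN unfolding N_def by simp
    have nd: "real n \<ge> 4 * d / \<delta>^2"
    proof -
      have "nat \<lceil>4 * d / \<delta>^2\<rceil> \<le> n" using nN unfolding N_def by simp
      hence "real (nat \<lceil>4 * d / \<delta>^2\<rceil>) \<le> real n" by linarith
      moreover have "4 * d / \<delta>^2 \<le> real (nat \<lceil>4 * d / \<delta>^2\<rceil>)" by linarith
      ultimately show ?thesis by linarith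
    qed
    have nr: "real n > 0" using n2 by simp
    have hN: "d / real n \<le> \<delta>^2 / 4"
    proof -
      have "4 * d \<le> real n * \<delta>^2" using nd \<delta> by (simp add: pos_divide_le_eq)
      thus ?thesis using nr by (simp add: pos_divide_le_eq field_simps)
    qed
    show "\<exists>Q. prob_space Q \<and> sets Q = sets (state_space n) \<and> emeasure Q (Xset n) = 1 \<and>
              (\<forall>x\<in>Xset n. drift V Y n x \<le> d \<longrightarrow>
                 (\<forall>B\<in>sets (state_space n).
                    emeasure (gibbs_kernel V a b0 Y n x) B \<ge> ennreal (exp (- C) / 2) * emeasure Q B))"
      unfolding C_def
      by (rule level_n[OF assms(1,2,3) \<delta> d n2]) (use hM h\<delta> n2 n0 hN in auto)
  qed
  show "\<exists>\<epsilon>0>0. \<exists>N::nat. \<forall>n\<ge>N. n \<ge> 2 \<longrightarrow>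
           (\<exists>Q. prob_space Q \<and> sets Q = sets (state_space n) \<and> emeasure Q (Xset n) = 1 \<and>
              (\<forall>x\<in>Xset n. drift V Y n x \<le> d \<longrightarrow>
                 (\<forall>B\<in>sets (state_space n).
                    emeasure (gibbs_kernel V a b0 Y n x) B \<ge> ennreal \<epsilon>0 * emeasure Q B)))"
    using e0 main by blast
qed


end
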